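(* Let $\kappa$ be a regular uncountable cardinal and suppose that $\rho_2$ is obtained by walking along a $\square^*_{<}(\kappa)$-sequence. Then $T(\rho_2)$ is a special $\kappa$-Aronszajn tree.
   Context: A $C$-sequence over $\kappa$ is $\vec C=\langle C_\delta\mid\delta<\kappa\rangle$, each $C_\delta$ closed in $\delta$ with $\sup(C_\delta)=\sup(\delta)$. It is a $\square^*_{<}(\kappa)$-sequence if it is weakly coherent ($|\{C_\delta\cap\epsilon\mid\delta<\kappa\}|<\kappa$ for every $\epsilon<\kappa$) and the set $R(\vec C)=\{\delta<\kappa\mid\delta\text{ a nonzero limit ordinal},\ \forall\alpha\in(\delta,\kappa)\,[\mathrm{otp}(C_\alpha\cap\delta)<\delta]\}$ contains a club. Walks: $\mathrm{Tr}(\beta,\gamma)(0)=\gamma$, $\mathrm{Tr}(\beta,\gamma)(n)=\min(C_{\mathrm{Tr}(\beta,\gamma)(n-1)}\setminus\beta)$ if $\mathrm{Tr}(\beta,\gamma)(n-1)>\beta$, else $\beta$; $\rho_2(\beta,\gamma)$ least $l$ with $\mathrm{Tr}(\beta,\gamma)(l)=\beta$; $T(\rho_2)=\{\rho_{2\delta}\restriction\gamma\mid\gamma\le\delta<\kappa\}$ under $\subseteq$, $\rho_{2\delta}(\xi)=\rho_2(\xi,\delta)$. A $\kappa$-tree has height $\kappa$ and levels of size $<\kappa$; $\kappa$-Aronszajn: no chain of size $\kappa$; special: there is $f:T\to T$ with $f(x)<_Tx$ for non-minimal $x$ and each $f^{-1}\{z\}$ covered by fewer than $\kappa$ antichains.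 *)

theory Defs
  imports Main "HOL-Library.Countable_Set"
begin

text \<open>The regular cardinal kappa is represented by a well-ordered type 'a:
  the elements of 'a are the ordinals below kappa, ordered by <.\<close>

definition kappa_rel :: "('a::wellorder) rel" where
  "kappa_rel = {(x, y). x \<le> y}"

definition regular_uncountable_cardinal_type :: "('a::wellorder) itself \<Rightarrow> bool" where
  "regular_uncountable_cardinal_type _ \<longleftrightarrow>
     card_order (kappa_rel :: 'a rel) \<and> regularCard (kappa_rel :: 'a rel)
     \<and> \<not> countable (UNIV :: 'a set)"

definition lim_ord :: "'a::wellorder \<Rightarrow> bool" where
  "lim_ord \<delta> \<longleftrightarrow> (\<exists>\<gamma>. \<gamma> < \<delta>) \<and> (\<forall>\<gamma><\<delta>. \<exists>\<eta>. \<gamma> < \<eta> \<and> \<eta> < \<delta>)"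

definition osup :: "'a::wellorder set \<Rightarrow> 'a" where
  "osup X = (LEAST \<alpha>. \<forall>x\<in>X. x \<le> \<alpha>)"

definition ord_iso_on :: "'t set \<Rightarrow> ('t \<Rightarrow> 't \<Rightarrow> bool) \<Rightarrow> ('b::order) set \<Rightarrow> bool" where
  "ord_iso_on A lt B \<longleftrightarrow> (\<exists>f. bij_betw f A B \<and> (\<forall>x\<in>A. \<forall>y\<in>A. lt x y \<longleftrightarrow> f x < f y))"

definition otp_less :: "'a::wellorder set \<Rightarrow> 'a \<Rightarrow> bool" where
  "otp_less X \<delta> \<longleftrightarrow> (\<exists>\<gamma><\<delta>. ord_iso_on X (<) {x. x < \<gamma>})"

definition closed_in_ord :: "'a::wellorder set \<Rightarrow> 'a \<Rightarrow> bool" where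
  "closed_in_ord C \<delta> \<longleftrightarrow>
     (\<forall>\<beta><\<delta>. lim_ord \<beta> \<and> (\<forall>\<gamma><\<beta>. \<exists>c\<in>C. \<gamma> < c \<and> c < \<beta>) \<longrightarrow> \<beta> \<in> C)"

definition C_sequence :: "('a::wellorder \<Rightarrow> 'a set) \<Rightarrow> bool" where
  "C_sequence C \<longleftrightarrow> (\<forall>\<delta>. C \<delta> \<subseteq> {x. x < \<delta>} \<and> closed_in_ord (C \<delta>) \<delta>
                         \<and> osup (C \<delta>) = osup {x. x < \<delta>})"

definition weakly_coherent :: "('a::wellorder \<Rightarrow> 'a set) \<Rightarrow> bool" where
  "weakly_coherent C \<longleftrightarrow>
     (\<forall>\<epsilon>. (card_of {C \<delta> \<inter> {x. x < \<epsilon>} | \<delta>. True}, kappa_rel :: 'a rel) \<in> ordLess)"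

definition R_set :: "('a::wellorder \<Rightarrow> 'a set) \<Rightarrow> 'a set" where
  "R_set C = {\<delta>. lim_ord \<delta> \<and> (\<forall>\<alpha>. \<delta> < \<alpha> \<longrightarrow> otp_less (C \<alpha> \<inter> {x. x < \<delta>}) \<delta>)}"

definition club :: "'a::wellorder set \<Rightarrow> bool" where
  "club D \<longleftrightarrow> (\<forall>\<alpha>. \<exists>\<beta>\<in>D. \<alpha> < \<beta>)
     \<and> (\<forall>\<beta>. lim_ord \<beta> \<and> (\<forall>\<gamma><\<beta>. \<exists>d\<in>D. \<gamma> < d \<and> d < \<beta>) \<longrightarrow> \<beta> \<in> D)"

definition square_star_lt :: "('a::wellorder \<Rightarrow> 'a set) \<Rightarrow> bool" where
  "square_star_lt C \<longleftrightarrow> C_sequence C \<and> weakly_coherent C \<and> (\<exists>D. club D \<and> D \<subseteq> R_set C)"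

fun Tr :: "('a::wellorder \<Rightarrow> 'a set) \<Rightarrow> 'a \<Rightarrow> 'a \<Rightarrow> nat \<Rightarrow> 'a" where
  "Tr C \<beta> \<gamma> 0 = \<gamma>"
| "Tr C \<beta> \<gamma> (Suc n) =
     (if Tr C \<beta> \<gamma> n > \<beta> then (LEAST x. x \<in> C (Tr C \<beta> \<gamma> n) \<and> \<beta> \<le> x) else \<beta>)"

definition rho2 :: "('a::wellorder \<Rightarrow> 'a set) \<Rightarrow> 'a \<Rightarrow> 'a \<Rightarrow> nat" where
  "rho2 C \<beta> \<gamma> = (LEAST l. Tr C \<beta> \<gamma> l = \<beta>)"

definition rho2_node :: "('a::wellorder \<Rightarrow> 'a set) \<Rightarrow> 'a \<Rightarrow> 'a \<Rightarrow> ('a \<Rightarrow> nat option)" where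
  "rho2_node C \<gamma> \<delta> = (\<lambda>\<xi>. if \<xi> < \<gamma> then Some (rho2 C \<xi> \<delta>) else None)"

definition T_rho2 :: "('a::wellorder \<Rightarrow> 'a set) \<Rightarrow> ('a \<Rightarrow> nat option) set" where
  "T_rho2 C = {rho2_node C \<gamma> \<delta> | \<gamma> \<delta>. \<gamma> \<le> \<delta>}"

definition subfun_less :: "('a \<Rightarrow> 'b option) \<Rightarrow> ('a \<Rightarrow> 'b option) \<Rightarrow> bool" where
  "subfun_less f g \<longleftrightarrow> f \<subseteq>\<^sub>m g \<and> f \<noteq> g"

definition tree_pred :: "'t set \<Rightarrow> ('t \<Rightarrow> 't \<Rightarrow> bool) \<Rightarrow> 't \<Rightarrow> 't set" where
  "tree_pred T lt x = {y \<in> T. lt y x}"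

definition is_tree :: "'t set \<Rightarrow> ('t \<Rightarrow> 't \<Rightarrow> bool) \<Rightarrow> bool" where
  "is_tree T lt \<longleftrightarrow>
     (\<forall>x\<in>T. \<not> lt x x) \<and> (\<forall>x\<in>T. \<forall>y\<in>T. \<forall>z\<in>T. lt x y \<and> lt y z \<longrightarrow> lt x z)
     \<and> (\<forall>x\<in>T. (\<forall>y\<in>tree_pred T lt x. \<forall>z\<in>tree_pred T lt x. lt y z \<or> y = z \<or> lt z y)
            \<and> (\<forall>S. S \<subseteq> tree_pred T lt x \<and> S \<noteq> {} \<longrightarrow> (\<exists>m\<in>S. \<forall>s\<in>S. \<not> lt s m)))"

definition tree_level :: "'t set \<Rightarrow> ('t \<Rightarrow> 't \<Rightarrow> bool) \<Rightarrow> 'a::wellorder \<Rightarrow> 't set" where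
  "tree_level T lt \<alpha> = {x \<in> T. ord_iso_on (tree_pred T lt x) lt {\<beta>. \<beta> < \<alpha>}}"

definition kappa_tree :: "'a::wellorder itself \<Rightarrow> 't set \<Rightarrow> ('t \<Rightarrow> 't \<Rightarrow> bool) \<Rightarrow> bool" where
  "kappa_tree _ T lt \<longleftrightarrow> is_tree T lt
     \<and> (\<forall>x\<in>T. \<exists>\<alpha>::'a. x \<in> tree_level T lt \<alpha>)
     \<and> (\<forall>\<alpha>::'a. tree_level T lt \<alpha> \<noteq> {})
     \<and> (\<forall>\<alpha>::'a. (card_of (tree_level T lt \<alpha>), kappa_rel :: 'a rel) \<in> ordLess)"

definition is_chain :: "'t set \<Rightarrow> ('t \<Rightarrow> 't \<Rightarrow> bool) \<Rightarrow> 't set \<Rightarrow> bool" where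
  "is_chain T lt B \<longleftrightarrow> B \<subseteq> T \<and> (\<forall>x\<in>B. \<forall>y\<in>B. lt x y \<or> x = y \<or> lt y x)"

definition is_antichain :: "'t set \<Rightarrow> ('t \<Rightarrow> 't \<Rightarrow> bool) \<Rightarrow> 't set \<Rightarrow> bool" where
  "is_antichain T lt A \<longleftrightarrow> A \<subseteq> T \<and> (\<forall>x\<in>A. \<forall>y\<in>A. x \<noteq> y \<longrightarrow> \<not> lt x y \<and> \<not> lt y x)"

definition kappa_aronszajn :: "'a::wellorder itself \<Rightarrow> 't set \<Rightarrow> ('t \<Rightarrow> 't \<Rightarrow> bool) \<Rightarrow> bool" where
  "kappa_aronszajn k T lt \<longleftrightarrow> kappa_tree k T lt
     \<and> (\<forall>B. is_chain T lt B \<longrightarrow> (card_of B, kappa_rel :: 'a rel) \<notin> ordIso)"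

definition special_tree :: "'a::wellorder itself \<Rightarrow> 't set \<Rightarrow> ('t \<Rightarrow> 't \<Rightarrow> bool) \<Rightarrow> bool" where
  "special_tree _ T lt \<longleftrightarrow>
     (\<exists>f. (\<forall>x\<in>T. f x \<in> T) \<and> (\<forall>x\<in>T. tree_pred T lt x \<noteq> {} \<longrightarrow> lt (f x) x)
        \<and> (\<forall>z\<in>T. \<exists>\<A>. (card_of \<A>, kappa_rel :: 'a rel) \<in> ordLess
                     \<and> (\<forall>A\<in>\<A>. is_antichain T lt A) \<and> {x\<in>T. f x = z} \<subseteq> \<Union>\<A>))"

end

theory Submission
  imports Defs
begin

unbundle cardinal_syntax

locale kap =
  assumes reg: "regular_uncountable_cardinal_type TYPE('a::wellorder)"
begin
unbundle cardinal_syntax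

definition small :: "'b set \<Rightarrow> bool" where
  "small A \<longleftrightarrow> ( |A|, kappa_rel :: 'a rel) \<in> ordLess"

lemma co: "Card_order (kappa_rel :: 'a rel)" and fld: "Field (kappa_rel :: 'a rel) = UNIV"
  and rc: "regularCard (kappa_rel :: 'a rel)" and unc: "\<not> countable (UNIV :: 'a set)"
  using reg unfolding regular_uncountable_cardinal_type_def
  by (auto simp: card_order_on_def Field_card_order)

lemma inf: "\<not> finite (Field (kappa_rel :: 'a rel))"
  unfolding fld using unc countable_finite by blast

lemma stab: "stable (kappa_rel :: 'a rel)"
  using regularCard_stable[OF co inf rc] .

lemma small_mono: "A \<subseteq> B \<Longrightarrow> small B \<Longrightarrow> small A"
  unfolding small_def using card_of_mono1 ordLeq_ordLess_trans by blast

lemma small_image: "small A \<Longrightarrow> small (f ` A)"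
  unfolding small_def using card_of_image ordLeq_ordLess_trans by blast

lemma small_UN: "small I \<Longrightarrow> (\<And>i. i \<in> I \<Longrightarrow> small (A i)) \<Longrightarrow> small (\<Union>i\<in>I. A i)"
  unfolding small_def using stable_UNION[OF stab] by blast

lemma small_Un: "small A \<Longrightarrow> small B \<Longrightarrow> small (A \<union> B)"
  unfolding small_def using card_of_Un_ordLess_infinite_Field[OF inf co] by blast

lemma UNIV_ordIso: "|UNIV :: 'a set| =o (kappa_rel :: 'a rel)"
  using card_of_Field_ordIso[OF co] fld by simp

lemma nat_less: "|UNIV :: nat set| <o |UNIV :: 'a set|"
proof (rule ccontr)
  assume a: "\<not> |UNIV :: nat set| <o |UNIV :: 'a set|"
  have "|UNIV :: 'a set| \<le>o |UNIV :: nat set|"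
    using a not_ordLess_iff_ordLeq[OF card_of_Well_order card_of_Well_order] by blast
  then obtain g :: "'a \<Rightarrow> nat" where "inj_on g UNIV"
    using card_of_ordLeq[of "UNIV :: 'a set" "UNIV :: nat set"] by blast
  then have "countable (UNIV :: 'a set)" unfolding countable_def by blast
  then show False using unc by blast
qed

lemma small_countable: "countable A \<Longrightarrow> small A"
proof -
  assume "countable A"
  then obtain f :: "_ \<Rightarrow> nat" where "inj_on f A" unfolding countable_def by blast
  then have "|A| \<le>o |UNIV :: nat set|"
    using card_of_ordLeq[of A "UNIV :: nat set"] by blast
  then have "|A| <o |UNIV :: 'a set|" using nat_less ordLeq_ordLess_trans by blast
  then show "small A" unfolding small_def
    using UNIV_ordIso ordLess_ordIso_trans by blast
qed

lemma small_finite: "finite A \<Longrightarrow> small A"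
  using small_countable countable_finite by blast

lemma small_below: "small {x :: 'a. x < a}"
proof -
  have e: "underS (kappa_rel :: 'a rel) a = {x :: 'a. x < a}"
    unfolding underS_def kappa_rel_def by auto
  have "|underS (kappa_rel::'a rel) a| <o (kappa_rel::'a rel)" using card_of_underS[OF co] fld by blast
  then show ?thesis unfolding small_def e .
qed

lemma small_le: "small {x :: 'a. x \<le> a}"
proof -
  have "{x :: 'a. x \<le> a} = {x. x < a} \<union> {a}" by auto
  then show ?thesis using small_Un[OF small_below[of a] small_finite[of "{a}"]] by simp
qed

lemma not_small_UNIV: "\<not> small (UNIV :: 'a set)"
proof
  assume "small (UNIV :: 'a set)"
  then show False unfolding small_def using UNIV_ordIso not_ordLess_ordIso by blast
qed

lemma no_max: "\<exists>y. (x::'a) < y"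
proof (rule ccontr)
  assume "\<not> (\<exists>y. x < y)"
  then have "UNIV = {y. y < x} \<union> {x}" using not_less_iff_gr_or_eq by auto
  then have "small (UNIV :: 'a set)" using small_Un[OF small_below[of x] small_finite[of "{x}"]] by simp
  then show False using not_small_UNIV by blast
qed

lemma small_bounded: assumes "small (A :: 'a set)" shows "\<exists>b. \<forall>x\<in>A. x < b"
proof (rule ccontr)
  assume nb: "\<not> (\<exists>b. \<forall>x\<in>A. x < b)"
  have "cofinal A kappa_rel" unfolding cofinal_def
  proof
    fix a :: 'a
    obtain a' where "a < a'" using no_max by blast
    moreover obtain x where "x \<in> A" "\<not> x < a'" using nb by blast
    ultimately show "\<exists>b\<in>A. a \<noteq> b \<and> (a, b) \<in> kappa_rel"
    proof -
      have "x \<ge> a'" using \<open>\<not> x < a'\<close> by simp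
      then have "a < x" using \<open>a < a'\<close> by simp
      then show ?thesis unfolding kappa_rel_def using \<open>x \<in> A\<close> by auto
    qed
  qed
  then have "|A| =o (kappa_rel :: 'a rel)" using rc fld unfolding regularCard_def by auto
  then show False using assms unfolding small_def using not_ordLess_ordIso by blast
qed

lemma bounded_small: "(\<forall>x\<in>A. x < b) \<Longrightarrow> small (A :: 'a set)"
  using small_mono[OF _ small_below[of b]] by auto

lemma small_Times: "small A \<Longrightarrow> small B \<Longrightarrow> small (A \<times> B)"
proof -
  assume a: "small A" and b: "small B"
  have "A \<times> B = (\<Union>x\<in>A. Pair x ` B)" by auto
  then show ?thesis using small_UN[OF a] small_image[OF b] by metis
qed

lemma small_lists_n: "small W \<Longrightarrow> small {l \<in> lists W. length l = n}"
proof (induction n)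
  case 0
  have "{l \<in> lists W. length l = 0} = {[]}" by auto
  then show ?case using small_finite[of "{[]}"] by simp
next
  case (Suc n)
  have "{l \<in> lists W. length l = Suc n} = (\<lambda>(w,l). w # l) ` (W \<times> {l \<in> lists W. length l = n})"
  proof
    show "{l \<in> lists W. length l = Suc n} \<subseteq> (\<lambda>(w,l). w # l) ` (W \<times> {l \<in> lists W. length l = n})"
    proof
      fix l assume l: "l \<in> {l \<in> lists W. length l = Suc n}"
      then obtain w l' where e: "l = w # l'" by (cases l) auto
      show "l \<in> (\<lambda>(w,l). w # l) ` (W \<times> {l \<in> lists W. length l = n})"
        by (rule image_eqI[where x="(w,l')"]) (use l e in auto)
    qed
  qed auto
  then show ?case using small_image[OF small_Times[OF Suc.prems Suc.IH[OF Suc.prems]], of "\<lambda>(w,l). w # l"] by simp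
qed

lemma small_lists: "small W \<Longrightarrow> small (lists W)"
proof -
  assume "small W"
  have "lists W = (\<Union>n\<in>UNIV. {l \<in> lists W. length l = n})" by auto
  then show ?thesis using small_UN[of "UNIV :: nat set" "\<lambda>n. {l \<in> lists W. length l = n}", OF small_countable[OF countableI_type] small_lists_n[OF \<open>small W\<close>]] by simp
qed

end


lemma strict_mono_ge:
  fixes g :: "'a::wellorder \<Rightarrow> 'a"
  assumes mono: "\<And>x y. x < y \<Longrightarrow> y < a \<Longrightarrow> g x < g y"
  shows "x < a \<Longrightarrow> x \<le> g x"
proof (induction x rule: less_induct)
  case (less x)
  show ?case
  proof (rule ccontr)
    assume "\<not> x \<le> g x"
    then have gx: "g x < x" by simp
    then have "g x < a" using less.prems by simp
    then have "g x \<le> g (g x)" using less.IH gx by blast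
    moreover have "g (g x) < g x" using mono[OF gx less.prems] .
    ultimately show False by simp
  qed
qed

lemma strict_mono_onto_le:
  fixes g :: "'a::wellorder \<Rightarrow> 'a"
  assumes mono: "\<And>x y. x < y \<Longrightarrow> y < a \<Longrightarrow> g x < g y"
    and onto: "\<And>y. y < b \<Longrightarrow> \<exists>x<a. g x = y"
    and into: "\<And>x. x < a \<Longrightarrow> g x < b"
  shows "x < a \<Longrightarrow> g x \<le> x"
proof (induction x rule: less_induct)
  case (less x)
  show ?case
  proof (rule ccontr)
    assume "\<not> g x \<le> x"
    then have gx: "x < g x" by simp
    then have "x < b" using into[OF less.prems] by simp
    then obtain x' where x': "x' < a" "g x' = x" using onto by blast
    have "x' < x"
    proof (rule ccontr)
      assume "\<not> x' < x"
      then have "x \<le> x'" by simp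
      then show False
      proof (cases "x = x'")
        case True then show False using x' gx by simp
      next
        case False
        then have "x < x'" using \<open>x \<le> x'\<close> by simp
        then have "g x < g x'" using mono x' by blast
        then show False using x' gx by simp
      qed
    qed
    then have "g x' \<le> x'" using less.IH x' by blast
    then show False using x' \<open>x' < x\<close> by simp
  qed
qed

lemma iso_initial_eq:
  fixes g :: "'a::wellorder \<Rightarrow> 'a"
  assumes mono: "\<And>x y. x < y \<Longrightarrow> y < a \<Longrightarrow> g x < g y"
    and onto: "\<And>y. y < b \<Longrightarrow> \<exists>x<a. g x = y"
    and into: "\<And>x. x < a \<Longrightarrow> g x < b"
  shows "a = b"
proof (rule ccontr)
  assume "a \<noteq> b"
  then consider "a < b" | "b < a" using not_less_iff_gr_or_eq by blast
  then show False
  proof cases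
    case 1
    then obtain x where x: "x < a" "g x = a" using onto by blast
    have "g x \<le> x" using strict_mono_onto_le[where g=g and a=a and b=b and x=x] assms x by blast
    then show False using x by simp
  next
    case 2
    have "b \<le> g b" by (rule strict_mono_ge[where g=g and a=a and x=b]) (use assms(1) 2 in auto)
    moreover have "g b < b" using into 2 by blast
    ultimately show False by simp
  qed
qed

definition rs :: "('a::wellorder \<Rightarrow> 'b) \<Rightarrow> 'a \<Rightarrow> ('a \<Rightarrow> 'b option)" where
  "rs h \<gamma> = (\<lambda>\<xi>. if \<xi> < \<gamma> then Some (h \<xi>) else None)"

definition lvl :: "('a::wellorder \<Rightarrow> 'b option) \<Rightarrow> 'a" where
  "lvl x = (LEAST \<xi>. x \<xi> = None)"

definition rx :: "('a::wellorder \<Rightarrow> 'b option) \<Rightarrow> 'a \<Rightarrow> ('a \<Rightarrow> 'b option)" where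
  "rx x \<beta> = (\<lambda>\<xi>. if \<xi> < \<beta> then x \<xi> else None)"

lemma lvl_rs[simp]: "lvl (rs h \<gamma>) = \<gamma>"
  unfolding lvl_def rs_def by (rule Least_equality) (auto split: if_splits simp: not_less)

lemma rs_le_iff: "(rs h \<gamma> \<subseteq>\<^sub>m rs h' \<gamma>') \<longleftrightarrow> \<gamma> \<le> \<gamma>' \<and> (\<forall>\<xi><\<gamma>. h \<xi> = h' \<xi>)"
proof
  assume a: "rs h \<gamma> \<subseteq>\<^sub>m rs h' \<gamma>'"
  have "\<gamma> \<le> \<gamma>'"
  proof (rule ccontr)
    assume "\<not> \<gamma> \<le> \<gamma>'"
    then have "\<gamma>' < \<gamma>" by simp
    then have "rs h \<gamma> \<gamma>' = Some (h \<gamma>')" unfolding rs_def by simp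
    then have "rs h' \<gamma>' \<gamma>' = Some (h \<gamma>')" using a unfolding map_le_def by (metis domIff option.distinct(1))
    then show False unfolding rs_def by simp
  qed
  moreover have "\<forall>\<xi><\<gamma>. h \<xi> = h' \<xi>"
  proof (intro allI impI)
    fix \<xi> assume "\<xi> < \<gamma>"
    then have "rs h \<gamma> \<xi> = Some (h \<xi>)" unfolding rs_def by simp
    then have "rs h' \<gamma>' \<xi> = Some (h \<xi>)" using a unfolding map_le_def by (metis domIff option.distinct(1))
    then show "h \<xi> = h' \<xi>" unfolding rs_def by (simp split: if_splits)
  qed
  ultimately show "\<gamma> \<le> \<gamma>' \<and> (\<forall>\<xi><\<gamma>. h \<xi> = h' \<xi>)" by blast
next
  assume "\<gamma> \<le> \<gamma>' \<and> (\<forall>\<xi><\<gamma>. h \<xi> = h' \<xi>)"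
  then show "rs h \<gamma> \<subseteq>\<^sub>m rs h' \<gamma>'" unfolding map_le_def rs_def by (auto simp: domIff split: if_splits)
qed

lemma rs_eq_iff: "(rs h \<gamma> = rs h' \<gamma>') \<longleftrightarrow> \<gamma> = \<gamma>' \<and> (\<forall>\<xi><\<gamma>. h \<xi> = h' \<xi>)"
proof
  assume "rs h \<gamma> = rs h' \<gamma>'"
  then have "rs h \<gamma> \<subseteq>\<^sub>m rs h' \<gamma>'" "rs h' \<gamma>' \<subseteq>\<^sub>m rs h \<gamma>" by auto
  then show "\<gamma> = \<gamma>' \<and> (\<forall>\<xi><\<gamma>. h \<xi> = h' \<xi>)" unfolding rs_le_iff by auto
next
  assume "\<gamma> = \<gamma>' \<and> (\<forall>\<xi><\<gamma>. h \<xi> = h' \<xi>)"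
  then show "rs h \<gamma> = rs h' \<gamma>'" unfolding rs_def by auto
qed

lemma rx_rs: "\<beta> \<le> \<gamma> \<Longrightarrow> rx (rs h \<gamma>) \<beta> = rs h \<beta>"
  unfolding rx_def rs_def by (rule ext) (auto dest: order.strict_trans2)

definition TT :: "('a::wellorder \<Rightarrow> 'a \<Rightarrow> 'b) \<Rightarrow> ('a \<Rightarrow> 'b option) set" where
  "TT H = {rs (H \<delta>) \<gamma> | \<gamma> \<delta>. \<gamma> \<le> \<delta>}"

definition rep :: "('a::wellorder \<Rightarrow> 'a \<Rightarrow> 'b) \<Rightarrow> ('a \<Rightarrow> 'b option) \<Rightarrow> 'a" where
  "rep H x = (SOME \<delta>. lvl x \<le> \<delta> \<and> x = rs (H \<delta>) (lvl x))"

lemma TT_rep: assumes "x \<in> TT H" shows "lvl x \<le> rep H x" "x = rs (H (rep H x)) (lvl x)"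
proof -
  obtain \<gamma> \<delta> where "x = rs (H \<delta>) \<gamma>" "\<gamma> \<le> \<delta>" using assms unfolding TT_def by blast
  then have "\<exists>\<delta>. lvl x \<le> \<delta> \<and> x = rs (H \<delta>) (lvl x)" by auto
  then have "lvl x \<le> rep H x \<and> x = rs (H (rep H x)) (lvl x)" unfolding rep_def by (rule someI_ex)
  then show "lvl x \<le> rep H x" "x = rs (H (rep H x)) (lvl x)" by auto
qed

lemma TT_I: "\<gamma> \<le> \<delta> \<Longrightarrow> rs (H \<delta>) \<gamma> \<in> TT H"
  unfolding TT_def by blast

lemma TT_rx: assumes "x \<in> TT H" "\<beta> \<le> lvl x" shows "rx x \<beta> \<in> TT H" "lvl (rx x \<beta>) = \<beta>"
proof -
  have e: "rx x \<beta> = rs (H (rep H x)) \<beta>" using TT_rep[OF assms(1)] rx_rs[OF assms(2)] by metis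
  show "rx x \<beta> \<in> TT H" unfolding e using TT_I TT_rep(1)[OF assms(1)] assms(2) by (metis order.trans)
  show "lvl (rx x \<beta>) = \<beta>" unfolding e by simp
qed

lemma TT_less_iff: assumes "x \<in> TT H" "y \<in> TT H"
  shows "subfun_less x y \<longleftrightarrow> lvl x < lvl y \<and> x = rx y (lvl x)"
proof -
  define hx where "hx = H (rep H x)"
  define hy where "hy = H (rep H y)"
  have x: "x = rs hx (lvl x)" and y: "y = rs hy (lvl y)" using TT_rep assms hx_def hy_def by metis+
  have "subfun_less x y \<longleftrightarrow> (lvl x \<le> lvl y \<and> (\<forall>\<xi><lvl x. hx \<xi> = hy \<xi>)) \<and> \<not>(lvl x = lvl y \<and> (\<forall>\<xi><lvl x. hx \<xi> = hy \<xi>))"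
    unfolding subfun_less_def using rs_le_iff[of hx "lvl x" hy "lvl y"] rs_eq_iff[of hx "lvl x" hy "lvl y"] x y by metis
  also have "\<dots> \<longleftrightarrow> lvl x < lvl y \<and> (\<forall>\<xi><lvl x. hx \<xi> = hy \<xi>)" by (auto simp: order_le_less)
  also have "\<dots> \<longleftrightarrow> lvl x < lvl y \<and> x = rx y (lvl x)"
  proof -
    have "lvl x < lvl y \<Longrightarrow> rx y (lvl x) = rs hy (lvl x)" using rx_rs[of "lvl x" "lvl y" hy] y by simp
    then show ?thesis using rs_eq_iff[of hx "lvl x" hy "lvl x"] x by metis
  qed
  finally show ?thesis .
qed

lemma TT_pred: assumes "x \<in> TT H"
  shows "tree_pred (TT H) subfun_less x = rx x ` {\<beta>. \<beta> < lvl x}"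
proof
  show "tree_pred (TT H) subfun_less x \<subseteq> rx x ` {\<beta>. \<beta> < lvl x}"
    unfolding tree_pred_def using TT_less_iff assms by blast
next
  show "rx x ` {\<beta>. \<beta> < lvl x} \<subseteq> tree_pred (TT H) subfun_less x"
  proof
    fix y assume "y \<in> rx x ` {\<beta>. \<beta> < lvl x}"
    then obtain \<beta> where b: "\<beta> < lvl x" "y = rx x \<beta>" by blast
    then have y: "y \<in> TT H" "lvl y = \<beta>" using TT_rx assms by (metis order.strict_implies_order)+
    then have "subfun_less y x" using TT_less_iff[OF y(1) assms] b by simp
    then show "y \<in> tree_pred (TT H) subfun_less x" unfolding tree_pred_def using y by simp
  qed
qed

lemma TT_less_lvl: "x \<in> TT H \<Longrightarrow> y \<in> TT H \<Longrightarrow> subfun_less x y \<Longrightarrow> lvl x < lvl y"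
  using TT_less_iff by blast

lemma TT_same_lvl: "x \<in> TT H \<Longrightarrow> y \<in> TT H \<Longrightarrow> lvl x = lvl y \<Longrightarrow> subfun_less x y \<Longrightarrow> False"
  using TT_less_lvl[of x H y] by simp

lemma rx_rx: "\<beta> \<le> \<beta>' \<Longrightarrow> rx (rx x \<beta>') \<beta> = rx x \<beta>"
  unfolding rx_def by (rule ext) (auto dest: order.strict_trans2)

lemma TT_is_tree: "is_tree (TT H) subfun_less"
  unfolding is_tree_def
proof (intro conjI ballI allI impI)
  fix x assume "x \<in> TT H"
  show "\<not> subfun_less x x" unfolding subfun_less_def by simp
next
  fix x y z assume xyz: "x \<in> TT H" "y \<in> TT H" "z \<in> TT H" and a: "subfun_less x y \<and> subfun_less y z"
  then have "lvl x < lvl y" "lvl y < lvl z" "x = rx y (lvl x)" "y = rx z (lvl y)" using TT_less_iff by blast+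
  then have "lvl x < lvl z" "x = rx z (lvl x)" using rx_rx[of "lvl x" "lvl y" z] by auto
  then show "subfun_less x z" using TT_less_iff[of x H z] xyz by simp
next
  fix x y z assume x: "x \<in> TT H" and y: "y \<in> tree_pred (TT H) subfun_less x" and z: "z \<in> tree_pred (TT H) subfun_less x"
  obtain \<beta> where b: "\<beta> < lvl x" "y = rx x \<beta>" using y TT_pred[OF x] by blast
  obtain \<beta>' where b': "\<beta>' < lvl x" "z = rx x \<beta>'" using z TT_pred[OF x] by blast
  have yT: "y \<in> TT H" "lvl y = \<beta>" using TT_rx[OF x, of \<beta>] b by auto
  have zT: "z \<in> TT H" "lvl z = \<beta>'" using TT_rx[OF x, of \<beta>'] b' by auto
  consider "\<beta> < \<beta>'" | "\<beta> = \<beta>'" | "\<beta>' < \<beta>" using not_less_iff_gr_or_eq by blast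
  then show "subfun_less y z \<or> y = z \<or> subfun_less z y"
  proof cases
    case 1
    then have "y = rx z \<beta>" using b b' rx_rx[of \<beta> \<beta>' x] by auto
    then have "subfun_less y z" using TT_less_iff[OF yT(1) zT(1)] yT zT 1 by simp
    then show ?thesis by blast
  next
    case 2 then show ?thesis using b b' by simp
  next
    case 3
    then have "z = rx y \<beta>'" using b b' rx_rx[of \<beta>' \<beta> x] by auto
    then have "subfun_less z y" using TT_less_iff[OF zT(1) yT(1)] yT zT 3 by simp
    then show ?thesis by blast
  qed
next
  fix x S assume x: "x \<in> TT H" and S: "S \<subseteq> tree_pred (TT H) subfun_less x \<and> S \<noteq> {}"
  then have ST: "S \<subseteq> TT H" unfolding tree_pred_def by blast
  obtain s0 where "s0 \<in> S" using S by blast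
  define m where "m = (LEAST \<beta>. \<exists>s\<in>S. lvl s = \<beta>)"
  have "\<exists>s\<in>S. lvl s = m" unfolding m_def by (rule LeastI[of _ "lvl s0"]) (use \<open>s0 \<in> S\<close> in blast)
  then obtain s where s: "s \<in> S" "lvl s = m" by blast
  have "\<forall>s'\<in>S. \<not> subfun_less s' s"
  proof (intro ballI notI)
    fix s' assume "s' \<in> S" "subfun_less s' s"
    then have "lvl s' < m" using TT_less_lvl ST s by blast
    moreover have "m \<le> lvl s'" unfolding m_def by (rule Least_le) (use \<open>s' \<in> S\<close> in blast)
    ultimately show False by simp
  qed
  then show "\<exists>m\<in>S. \<forall>s\<in>S. \<not> subfun_less s m" using s by blast
qed

lemma TT_level_iff: assumes "x \<in> TT H"
  shows "x \<in> tree_level (TT H) subfun_less \<alpha> \<longleftrightarrow> lvl x = \<alpha>"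
proof -
  have lv: "\<beta> < lvl x \<Longrightarrow> lvl (rx x \<beta>) = \<beta>" for \<beta> using TT_rx(2)[OF assms, of \<beta>] by simp
  have inT: "\<beta> < lvl x \<Longrightarrow> rx x \<beta> \<in> TT H" for \<beta> using TT_rx(1)[OF assms, of \<beta>] by simp
  have iso_lvl: "ord_iso_on (tree_pred (TT H) subfun_less x) subfun_less {\<beta>. \<beta> < lvl x}"
    unfolding ord_iso_on_def
  proof (intro exI conjI ballI)
    show "bij_betw lvl (tree_pred (TT H) subfun_less x) {\<beta>. \<beta> < lvl x}"
      unfolding TT_pred[OF assms] bij_betw_def
    proof
      show "inj_on lvl (rx x ` {\<beta>. \<beta> < lvl x})"
      proof (rule inj_onI)
        fix a b assume "a \<in> rx x ` {\<beta>. \<beta> < lvl x}" "b \<in> rx x ` {\<beta>. \<beta> < lvl x}" "lvl a = lvl b"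
        then obtain \<beta> \<beta>' where "\<beta> < lvl x" "\<beta>' < lvl x" "a = rx x \<beta>" "b = rx x \<beta>'" by blast
        then show "a = b" using lv \<open>lvl a = lvl b\<close> by simp
      qed
      have "lvl ` rx x ` {\<beta>. \<beta> < lvl x} = (\<lambda>\<beta>. lvl (rx x \<beta>)) ` {\<beta>. \<beta> < lvl x}" by (simp add: image_image)
      also have "\<dots> = (\<lambda>\<beta>. \<beta>) ` {\<beta>. \<beta> < lvl x}" by (rule image_cong) (auto simp: lv)
      finally show "lvl ` rx x ` {\<beta>. \<beta> < lvl x} = {\<beta>. \<beta> < lvl x}" by simp
    qed
  next
    fix y z assume "y \<in> tree_pred (TT H) subfun_less x" "z \<in> tree_pred (TT H) subfun_less x"
    then obtain \<beta> \<beta>' where b: "\<beta> < lvl x" "\<beta>' < lvl x" "y = rx x \<beta>" "z = rx x \<beta>'"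
      unfolding TT_pred[OF assms] by blast
    have yz: "y \<in> TT H" "z \<in> TT H" "lvl y = \<beta>" "lvl z = \<beta>'" using b lv inT by auto
    show "subfun_less y z \<longleftrightarrow> lvl y < lvl z"
    proof
      assume "subfun_less y z" then show "lvl y < lvl z" using TT_less_lvl yz by blast
    next
      assume "lvl y < lvl z"
      then have "y = rx z (lvl y)" using b yz rx_rx[of \<beta> \<beta>' x] by simp
      then show "subfun_less y z" using TT_less_iff[OF yz(1,2)] \<open>lvl y < lvl z\<close> by simp
    qed
  qed
  show ?thesis
  proof
    assume "x \<in> tree_level (TT H) subfun_less \<alpha>"
    then obtain F where F: "bij_betw F (tree_pred (TT H) subfun_less x) {\<beta>. \<beta> < \<alpha>}"
      "\<forall>y\<in>tree_pred (TT H) subfun_less x. \<forall>z\<in>tree_pred (TT H) subfun_less x. subfun_less y z \<longleftrightarrow> F y < F z"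
      unfolding tree_level_def ord_iso_on_def by blast
    define g where "g = (\<lambda>\<beta>. F (rx x \<beta>))"
    have P: "\<beta> < lvl x \<Longrightarrow> rx x \<beta> \<in> tree_pred (TT H) subfun_less x" for \<beta>
      unfolding TT_pred[OF assms] by blast
    have "lvl x = \<alpha>"
    proof (rule iso_initial_eq[where g=g and a="lvl x" and b=\<alpha>])
      fix a b assume ab: "a < b" "b < lvl x"
      then have al: "a < lvl x" by simp
      have "rx x a = rx (rx x b) a" using rx_rx[of a b x] ab by simp
      then have "subfun_less (rx x a) (rx x b)"
        using TT_less_iff[OF inT[OF al] inT[OF ab(2)]] lv[OF al] lv[OF ab(2)] ab by simp
      then show "g a < g b" unfolding g_def using F(2) P[OF al] P[OF ab(2)] by blast
    next
      fix y assume "y < \<alpha>"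
      then have "y \<in> F ` tree_pred (TT H) subfun_less x" using F(1) unfolding bij_betw_def by simp
      then obtain p where "p \<in> tree_pred (TT H) subfun_less x" "F p = y" by (rule imageE) simp
      then show "\<exists>a<lvl x. g a = y" unfolding g_def TT_pred[OF assms] by blast
    next
      fix a assume "a < lvl x"
      then show "g a < \<alpha>" unfolding g_def using P F(1) unfolding bij_betw_def by blast
    qed
    then show "lvl x = \<alpha>" .
  next
    assume "lvl x = \<alpha>"
    then show "x \<in> tree_level (TT H) subfun_less \<alpha>" unfolding tree_level_def using iso_lvl assms by simp
  qed
qed


definition nb :: "'a::wellorder \<Rightarrow> bool" where "nb \<beta> \<longleftrightarrow> (\<exists>y. y < \<beta>)"

definition cof :: "'a::wellorder set \<Rightarrow> 'a \<Rightarrow> bool" where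
  "cof A \<gamma> \<longleftrightarrow> (\<forall>\<beta><\<gamma>. \<exists>c\<in>A. \<beta> < c \<and> c < \<gamma>)"

lemma lim_nb: "lim_ord \<gamma> \<Longrightarrow> nb \<gamma>" unfolding lim_ord_def nb_def by blast

locale cseq =
  fixes C :: "'a::wellorder \<Rightarrow> 'a set"
  assumes cs: "C_sequence C"
begin

lemma C_below: "c \<in> C \<delta> \<Longrightarrow> c < \<delta>"
  using cs unfolding C_sequence_def by blast

lemma C_closed: "closed_in_ord (C \<delta>) \<delta>"
  using cs unfolding C_sequence_def by blast

lemma C_closed': "\<beta> < \<delta> \<Longrightarrow> lim_ord \<beta> \<Longrightarrow> cof (C \<delta>) \<beta> \<Longrightarrow> \<beta> \<in> C \<delta>"
  using C_closed unfolding closed_in_ord_def cof_def by blast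

lemma osup_ub: assumes "\<forall>x\<in>X. x \<le> b" shows "\<forall>x\<in>X. x \<le> osup X" "osup X \<le> b"
proof -
  show "\<forall>x\<in>X. x \<le> osup X" unfolding osup_def by (rule LeastI[of _ b]) (use assms in blast)
  show "osup X \<le> b" unfolding osup_def by (rule Least_le) (use assms in blast)
qed

lemma osup_least: assumes "\<forall>x\<in>X. x \<le> b" "a < osup X" shows "\<exists>x\<in>X. a < x"
proof (rule ccontr)
  assume "\<not> (\<exists>x\<in>X. a < x)"
  then have "\<forall>x\<in>X. x \<le> a" by (simp add: not_less)
  then have "osup X \<le> a" using osup_ub by blast
  then show False using assms by simp
qed

lemma exists_above: assumes "\<beta> < \<delta>" "nb \<beta>" shows "\<exists>x\<in>C \<delta>. \<beta> \<le> x"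
proof (rule ccontr)
  assume "\<not> (\<exists>x\<in>C \<delta>. \<beta> \<le> x)"
  then have lt: "\<forall>x\<in>C \<delta>. x < \<beta>" by (simp add: not_le)
  have e: "osup (C \<delta>) = osup {x. x < \<delta>}" using cs unfolding C_sequence_def by blast
  have "\<forall>x\<in>{x. x < \<delta>}. x \<le> \<delta>" by (simp add: order.strict_implies_order)
  then have "\<beta> \<le> osup {x. x < \<delta>}" using osup_ub(1) assms(1) by blast
  moreover have "osup (C \<delta>) \<le> \<beta>" using osup_ub(2) lt by (meson order.strict_implies_order)
  ultimately have sb: "osup (C \<delta>) = \<beta>" using e by simp
  have cofb: "cof (C \<delta>) \<beta>" unfolding cof_def
  proof (intro allI impI)
    fix g assume "g < \<beta>"
    then have "g < osup (C \<delta>)" using sb by simp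
    then obtain c where "c \<in> C \<delta>" "g < c" using osup_least[of "C \<delta>" \<beta> g] lt by (meson order.strict_implies_order)
    then show "\<exists>c\<in>C \<delta>. g < c \<and> c < \<beta>" using lt by blast
  qed
  show False
  proof (cases "lim_ord \<beta>")
    case True
    then have "\<beta> \<in> C \<delta>" using C_closed' assms(1) cofb by blast
    then show False using lt by blast
  next
    case False
    then obtain g where g: "g < \<beta>" "\<forall>\<eta>. \<not> (g < \<eta> \<and> \<eta> < \<beta>)" using assms(2) unfolding lim_ord_def nb_def by blast
    then show False using cofb unfolding cof_def by blast
  qed
qed

lemma least_above: assumes "\<beta> < \<delta>" "nb \<beta>"
  shows "(LEAST x. x \<in> C \<delta> \<and> \<beta> \<le> x) \<in> C \<delta>" "\<beta> \<le> (LEAST x. x \<in> C \<delta> \<and> \<beta> \<le> x)"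
    "(LEAST x. x \<in> C \<delta> \<and> \<beta> \<le> x) < \<delta>"
proof -
  obtain x where "x \<in> C \<delta>" "\<beta> \<le> x" using exists_above[OF assms] by blast
  then have "(LEAST x. x \<in> C \<delta> \<and> \<beta> \<le> x) \<in> C \<delta> \<and> \<beta> \<le> (LEAST x. x \<in> C \<delta> \<and> \<beta> \<le> x)"
    using LeastI[of "\<lambda>x. x \<in> C \<delta> \<and> \<beta> \<le> x" x] by blast
  then show "(LEAST x. x \<in> C \<delta> \<and> \<beta> \<le> x) \<in> C \<delta>" "\<beta> \<le> (LEAST x. x \<in> C \<delta> \<and> \<beta> \<le> x)"
    "(LEAST x. x \<in> C \<delta> \<and> \<beta> \<le> x) < \<delta>" using C_below by auto
qed

lemma Tr_fix: "Tr C \<beta> \<gamma> n = \<beta> \<Longrightarrow> Tr C \<beta> \<gamma> (Suc n) = \<beta>"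
  by simp

lemma Tr_ge: assumes "nb \<beta>" "\<beta> \<le> \<gamma>" shows "\<beta> \<le> Tr C \<beta> \<gamma> n"
proof (induction n)
  case 0 then show ?case using assms by simp
next
  case (Suc n)
  show ?case
  proof (cases "\<beta> < Tr C \<beta> \<gamma> n")
    case True
    then show ?thesis using least_above(2)[OF True assms(1)] by simp
  next
    case False then show ?thesis by simp
  qed
qed

lemma Tr_dec: assumes "nb \<beta>" "\<beta> < Tr C \<beta> \<gamma> n"
  shows "Tr C \<beta> \<gamma> (Suc n) < Tr C \<beta> \<gamma> n" "Tr C \<beta> \<gamma> (Suc n) \<in> C (Tr C \<beta> \<gamma> n)"
  using least_above[OF assms(2) assms(1)] assms(2) by auto

lemma Tr_term: assumes "nb \<beta>" "\<beta> \<le> \<gamma>" shows "\<exists>l. Tr C \<beta> \<gamma> l = \<beta>"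
proof -
  define m where "m = (LEAST t. t \<in> range (Tr C \<beta> \<gamma>))"
  have "m \<in> range (Tr C \<beta> \<gamma>)" unfolding m_def by (rule LeastI[of _ "Tr C \<beta> \<gamma> 0"]) blast
  then obtain k where k: "Tr C \<beta> \<gamma> k = m" by blast
  have "\<not> \<beta> < m"
  proof
    assume "\<beta> < m"
    then have "Tr C \<beta> \<gamma> (Suc k) < m" using Tr_dec(1)[OF assms(1)] k by metis
    moreover have "m \<le> Tr C \<beta> \<gamma> (Suc k)" unfolding m_def by (rule Least_le) blast
    ultimately show False by simp
  qed
  moreover have "\<beta> \<le> m" using Tr_ge[OF assms] k by metis
  ultimately show ?thesis using k by (metis order.not_eq_order_implies_strict)
qed

lemma rho2_spec: assumes "nb \<beta>" "\<beta> \<le> \<gamma>"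
  shows "Tr C \<beta> \<gamma> (rho2 C \<beta> \<gamma>) = \<beta>" "i < rho2 C \<beta> \<gamma> \<Longrightarrow> \<beta> < Tr C \<beta> \<gamma> i"
proof -
  obtain l where l: "Tr C \<beta> \<gamma> l = \<beta>" using Tr_term[OF assms] by blast
  show "Tr C \<beta> \<gamma> (rho2 C \<beta> \<gamma>) = \<beta>" unfolding rho2_def by (rule LeastI[of _ l]) (rule l)
  assume "i < rho2 C \<beta> \<gamma>"
  then have "Tr C \<beta> \<gamma> i \<noteq> \<beta>" unfolding rho2_def using not_less_Least by blast
  then show "\<beta> < Tr C \<beta> \<gamma> i" using Tr_ge[OF assms, of i] by simp
qed

lemma Tr_shift: "Tr C \<beta> \<gamma> (n + k) = Tr C \<beta> (Tr C \<beta> \<gamma> n) k"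
  by (induction k) simp_all

lemma Tr_stay: assumes "Tr C \<beta> \<gamma> n = \<beta>" "n \<le> m" shows "Tr C \<beta> \<gamma> m = \<beta>"
  using assms(2,1)
proof (induction m rule: dec_induct)
  case base then show ?case by simp
next
  case (step m) then show ?case by simp
qed

lemma rho2_shift: assumes "nb \<beta>" "\<beta> \<le> \<gamma>" "\<And>i. i < n \<Longrightarrow> Tr C \<beta> \<gamma> i \<noteq> \<beta>"
  shows "rho2 C \<beta> \<gamma> = n + rho2 C \<beta> (Tr C \<beta> \<gamma> n)"
proof -
  define t where "t = Tr C \<beta> \<gamma> n"
  have bt: "\<beta> \<le> t" unfolding t_def using Tr_ge[OF assms(1,2)] by blast
  have tt: "Tr C \<beta> \<gamma> (n + rho2 C \<beta> t) = \<beta>" unfolding Tr_shift t_def[symmetric] using rho2_spec(1)[OF assms(1) bt] .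
  show ?thesis unfolding t_def[symmetric] rho2_def[of C \<beta> \<gamma>]
  proof (rule Least_equality)
    show "Tr C \<beta> \<gamma> (n + rho2 C \<beta> t) = \<beta>" by (rule tt)
  next
    fix l assume l: "Tr C \<beta> \<gamma> l = \<beta>"
    have "n \<le> l" using assms(3) l by (meson not_le)
    then obtain k where k: "l = n + k" using le_Suc_ex by blast
    then have "Tr C \<beta> t k = \<beta>" using l Tr_shift t_def by metis
    then have "rho2 C \<beta> t \<le> k" unfolding rho2_def by (rule Least_le)
    then show "n + rho2 C \<beta> t \<le> l" using k by simp
  qed
qed

lemma rho2_refl: "rho2 C \<beta> \<beta> = 0"
  unfolding rho2_def by (rule Least_equality) auto

lemma rho2_first: assumes "nb \<xi>" "\<xi> < \<eta>"
  shows "rho2 C \<xi> \<eta> = Suc (rho2 C \<xi> (LEAST x. x \<in> C \<eta> \<and> \<xi> \<le> x))"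
proof -
  have "rho2 C \<xi> \<eta> = 1 + rho2 C \<xi> (Tr C \<xi> \<eta> 1)"
    by (rule rho2_shift) (use assms in auto)
  then show ?thesis using assms by simp
qed

lemma rho2_zero_iff: assumes "nb \<xi>" "\<xi> \<le> \<eta>" shows "rho2 C \<xi> \<eta> = 0 \<longleftrightarrow> \<eta> = \<xi>"
proof
  assume "rho2 C \<xi> \<eta> = 0"
  then show "\<eta> = \<xi>" using rho2_spec(1)[OF assms] by simp
next
  assume "\<eta> = \<xi>" then show "rho2 C \<xi> \<eta> = 0" using rho2_refl by simp
qed

lemma rho2_one_iff: assumes "nb \<xi>" "\<xi> < \<eta>" shows "rho2 C \<xi> \<eta> = 1 \<longleftrightarrow> \<xi> \<in> C \<eta>"
proof -
  define L where "L = (LEAST x. x \<in> C \<eta> \<and> \<xi> \<le> x)"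
  have L: "L \<in> C \<eta>" "\<xi> \<le> L" unfolding L_def using least_above[OF assms(2,1)] by auto
  have "rho2 C \<xi> \<eta> = Suc (rho2 C \<xi> L)" unfolding L_def by (rule rho2_first[OF assms])
  then have "rho2 C \<xi> \<eta> = 1 \<longleftrightarrow> L = \<xi>" using rho2_zero_iff[OF assms(1) L(2)] by simp
  also have "\<dots> \<longleftrightarrow> \<xi> \<in> C \<eta>"
  proof
    assume "L = \<xi>" then show "\<xi> \<in> C \<eta>" using L by simp
  next
    assume "\<xi> \<in> C \<eta>"
    then have "L \<le> \<xi>" unfolding L_def by (rule_tac Least_le) simp
    then show "L = \<xi>" using L by simp
  qed
  finally show ?thesis .
qed

lemma Tr_agree: assumes "nb \<xi>" "\<xi> < \<gamma>"
  and "\<And>i. i < j \<Longrightarrow> \<gamma> < Tr C \<gamma> \<delta> i \<and> (\<forall>c\<in>C (Tr C \<gamma> \<delta> i). c < \<gamma> \<longrightarrow> c < \<xi>)"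
  shows "i \<le> j \<Longrightarrow> Tr C \<xi> \<delta> i = Tr C \<gamma> \<delta> i"
proof (induction i)
  case 0 then show ?case by simp
next
  case (Suc i)
  then have IH: "Tr C \<xi> \<delta> i = Tr C \<gamma> \<delta> i" by simp
  define t where "t = Tr C \<gamma> \<delta> i"
  have t: "\<gamma> < t" "\<forall>c\<in>C t. c < \<gamma> \<longrightarrow> c < \<xi>" using assms(3)[of i] Suc.prems t_def by auto
  have xt: "\<xi> < t" using t assms(2) by simp
  have "(\<lambda>x. x \<in> C t \<and> \<xi> \<le> x) = (\<lambda>x. x \<in> C t \<and> \<gamma> \<le> x)"
  proof (rule ext)
    fix x
    show "(x \<in> C t \<and> \<xi> \<le> x) = (x \<in> C t \<and> \<gamma> \<le> x)"
      using t(2) assms(2) by (meson leD le_less_linear order.strict_implies_order order.strict_trans2)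
  qed
  then show ?case using IH xt t(1) unfolding t_def by simp
qed

end


fun Phi :: "('a::wellorder \<Rightarrow> 'a set) \<Rightarrow> 'a \<Rightarrow> 'a set list \<Rightarrow> 'a \<Rightarrow> nat" where
  "Phi C \<alpha> [] \<xi> = rho2 C \<xi> \<alpha>"
| "Phi C \<alpha> (A # L) \<xi> = (if \<exists>y\<in>A. \<xi> \<le> y then Suc (rho2 C \<xi> (LEAST y. y \<in> A \<and> \<xi> \<le> y)) else Suc (Phi C \<alpha> L \<xi>))"

context cseq
begin

definition Lw :: "'a \<Rightarrow> 'a \<Rightarrow> 'a set list" where
  "Lw \<alpha> \<delta> = map (\<lambda>i. C (Tr C \<alpha> \<delta> i) \<inter> {x. x < \<alpha>}) [0..<rho2 C \<alpha> \<delta>]"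

lemma Lw_refl: "Lw \<alpha> \<alpha> = []"
  unfolding Lw_def rho2_refl by simp

lemma Lw_step: assumes "nb \<alpha>" "\<alpha> < \<delta>"
  shows "Lw \<alpha> \<delta> = (C \<delta> \<inter> {x. x < \<alpha>}) # Lw \<alpha> (Tr C \<alpha> \<delta> 1)"
proof -
  have r: "rho2 C \<alpha> \<delta> = Suc (rho2 C \<alpha> (Tr C \<alpha> \<delta> 1))"
    using rho2_first[OF assms] assms by simp
  have t: "Tr C \<alpha> \<delta> (Suc i) = Tr C \<alpha> (Tr C \<alpha> \<delta> 1) i" for i
    using Tr_shift[of \<alpha> \<delta> 1 i] by simp
  show ?thesis unfolding Lw_def r map_upt_Suc t by simp
qed

lemma Phi_walk: assumes "nb \<xi>" "\<xi> < \<alpha>"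
  shows "\<alpha> \<le> \<delta> \<Longrightarrow> rho2 C \<xi> \<delta> = Phi C \<alpha> (Lw \<alpha> \<delta>) \<xi>"
proof (induction \<delta> rule: less_induct)
  case (less \<delta>)
  have na: "nb \<alpha>" using assms(2) unfolding nb_def by blast
  show ?case
  proof (cases "\<delta> = \<alpha>")
    case True
    then show ?thesis using Lw_refl by simp
  next
    case False
    then have ad: "\<alpha> < \<delta>" using less.prems by simp
    have xd: "\<xi> < \<delta>" using ad assms(2) by simp
    define \<delta>1 where "\<delta>1 = Tr C \<alpha> \<delta> 1"
    have d1: "\<delta>1 = (LEAST x. x \<in> C \<delta> \<and> \<alpha> \<le> x)" unfolding \<delta>1_def using ad by simp
    have d1p: "\<delta>1 < \<delta>" "\<alpha> \<le> \<delta>1" unfolding d1 using least_above[OF ad na] by auto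
    have L: "Lw \<alpha> \<delta> = (C \<delta> \<inter> {x. x < \<alpha>}) # Lw \<alpha> \<delta>1" unfolding \<delta>1_def by (rule Lw_step[OF na ad])
    have r: "rho2 C \<xi> \<delta> = Suc (rho2 C \<xi> (LEAST x. x \<in> C \<delta> \<and> \<xi> \<le> x))" by (rule rho2_first[OF assms(1) xd])
    show ?thesis
    proof (cases "\<exists>y\<in>C \<delta> \<inter> {x. x < \<alpha>}. \<xi> \<le> y")
      case True
      then obtain y where y: "y \<in> C \<delta>" "y < \<alpha>" "\<xi> \<le> y" by blast
      have "(LEAST x. x \<in> C \<delta> \<and> \<xi> \<le> x) = (LEAST x. x \<in> C \<delta> \<inter> {x. x < \<alpha>} \<and> \<xi> \<le> x)"
      proof -
        define M where "M = (LEAST x. x \<in> C \<delta> \<and> \<xi> \<le> x)"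
        have M: "M \<in> C \<delta>" "\<xi> \<le> M" "M \<le> y" unfolding M_def using least_above[OF xd assms(1)] y
          by (auto intro: Least_le)
        have "(LEAST x. x \<in> C \<delta> \<inter> {x. x < \<alpha>} \<and> \<xi> \<le> x) = M"
        proof (rule Least_equality)
          show "M \<in> C \<delta> \<inter> {x. x < \<alpha>} \<and> \<xi> \<le> M" using M y by auto
          fix z assume "z \<in> C \<delta> \<inter> {x. x < \<alpha>} \<and> \<xi> \<le> z"
          then show "M \<le> z" unfolding M_def by (intro Least_le) auto
        qed
        then show ?thesis unfolding M_def by simp
      qed
      then show ?thesis using r True unfolding L by simp
    next
      case False
      have "(LEAST x. x \<in> C \<delta> \<and> \<xi> \<le> x) = \<delta>1"
      proof -
        have "(\<lambda>x. x \<in> C \<delta> \<and> \<xi> \<le> x) = (\<lambda>x. x \<in> C \<delta> \<and> \<alpha> \<le> x)"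
        proof (rule ext)
          fix x show "(x \<in> C \<delta> \<and> \<xi> \<le> x) = (x \<in> C \<delta> \<and> \<alpha> \<le> x)"
          proof
            assume a: "x \<in> C \<delta> \<and> \<xi> \<le> x"
            have "\<not> x < \<alpha>"
            proof
              assume "x < \<alpha>" then show False using False a by blast
            qed
            then show "x \<in> C \<delta> \<and> \<alpha> \<le> x" using a by simp
          next
            assume "x \<in> C \<delta> \<and> \<alpha> \<le> x"
            then show "x \<in> C \<delta> \<and> \<xi> \<le> x" using assms(2) by (meson order.strict_implies_order order.trans)
          qed
        qed
        then show ?thesis unfolding d1 by simp
      qed
      moreover have "rho2 C \<xi> \<delta>1 = Phi C \<alpha> (Lw \<alpha> \<delta>1) \<xi>" using less.IH d1p by blast
      ultimately show ?thesis using r False unfolding L by simp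
    qed
  qed
qed

lemma level_det: assumes "\<alpha> \<le> \<delta>" "\<alpha> \<le> \<delta>'" "Lw \<alpha> \<delta> = Lw \<alpha> \<delta>'"
  "rho2 C (LEAST x. True) \<delta> = rho2 C (LEAST x. True) \<delta>'" "\<xi> < \<alpha>"
  shows "rho2 C \<xi> \<delta> = rho2 C \<xi> \<delta>'"
proof (cases "nb \<xi>")
  case True
  then show ?thesis using Phi_walk[OF True assms(5)] assms by metis
next
  case False
  then have "\<xi> = (LEAST x. True)" unfolding nb_def
    by (metis (mono_tags, lifting) Least_le antisym_conv2)
  then show ?thesis using assms(4) by simp
qed

end


locale main =
  fixes C :: "'a::wellorder \<Rightarrow> 'a set"
  assumes reg0: "regular_uncountable_cardinal_type TYPE('a)"
    and sq: "square_star_lt C"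

sublocale main \<subseteq> cseq C
  using sq unfolding square_star_lt_def by unfold_locales blast

sublocale main \<subseteq> kap
  using reg0 by unfold_locales

context main
begin

abbreviation "H \<equiv> (\<lambda>\<delta> \<xi>. rho2 C \<xi> \<delta>)"

lemma T_eq: "T_rho2 C = TT H"
  unfolding T_rho2_def TT_def rho2_node_def rs_def by simp

lemma level_eq: "tree_level (TT H) subfun_less (\<alpha>::'a) = {x \<in> TT H. lvl x = \<alpha>}"
  using TT_level_iff unfolding tree_level_def by blast

lemma W_small: "small {C \<delta> \<inter> {x. x < \<alpha>} | \<delta>. True}"
  using sq unfolding square_star_lt_def weakly_coherent_def small_def by blast

lemma level_small: "small (tree_level (TT H) subfun_less (\<alpha>::'a))"
proof -
  define W where "W = {C \<delta> \<inter> {x. x < \<alpha>} | \<delta>. True}"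
  define key where "key = (\<lambda>\<delta>. (rho2 C (LEAST x. True) \<delta>, Lw \<alpha> \<delta>))"
  define G where "G = (\<lambda>k. rs (H (SOME \<delta>. \<alpha> \<le> \<delta> \<and> key \<delta> = k)) \<alpha>)"
  have "tree_level (TT H) subfun_less \<alpha> \<subseteq> G ` (UNIV \<times> lists W)"
  proof
    fix x assume "x \<in> tree_level (TT H) subfun_less \<alpha>"
    then have x: "x \<in> TT H" "lvl x = \<alpha>" unfolding level_eq by auto
    define d where "d = rep H x"
    have d: "\<alpha> \<le> d" "x = rs (H d) \<alpha>" using TT_rep[OF x(1)] x(2) d_def by auto
    have kin: "key d \<in> UNIV \<times> lists W" unfolding key_def Lw_def W_def by auto
    define d' where "d' = (SOME \<delta>. \<alpha> \<le> \<delta> \<and> key \<delta> = key d)"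
    have d': "\<alpha> \<le> d'" "key d' = key d" unfolding d'_def by (rule someI2[of _ d], use d in auto)+
    have "\<forall>\<xi><\<alpha>. H d' \<xi> = H d \<xi>"
      using level_det[OF d'(1) d(1)] d'(2) unfolding key_def by auto
    then have gx: "G (key d) = x" unfolding G_def d'_def[symmetric] d(2) using rs_eq_iff by blast
    show "x \<in> G ` (UNIV \<times> lists W)" by (rule rev_image_eqI[OF kin]) (use gx in simp)
  qed
  moreover have "small ((UNIV :: nat set) \<times> lists W)"
  proof -
    have a: "small (UNIV :: nat set)" by (rule small_countable) simp
    have b: "small (lists W)" by (rule small_lists) (use W_small W_def in simp)
    show ?thesis by (rule small_Times[OF a b])
  qed
  ultimately show ?thesis using small_mono small_image by blast
qed

end


definition emb :: "'a::wellorder set \<Rightarrow> 'a \<Rightarrow> bool" where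
  "emb A ob \<longleftrightarrow> (\<exists>g. (\<forall>a\<in>A. \<forall>b\<in>A. a < b \<longrightarrow> g a < g b) \<and> (\<forall>a\<in>A. g a < ob))"

context main
begin

definition D :: "'a set" where "D = (SOME D. club D \<and> D \<subseteq> R_set C)"

lemma D_spec: "club D" "D \<subseteq> R_set C"
proof -
  have "\<exists>D. club D \<and> D \<subseteq> R_set C" using sq unfolding square_star_lt_def by blast
  then have "club D \<and> D \<subseteq> R_set C" unfolding D_def by (rule someI_ex)
  then show "club D" "D \<subseteq> R_set C" by auto
qed

lemma D_lim: "\<gamma> \<in> D \<Longrightarrow> lim_ord \<gamma>"
  using D_spec(2) unfolding R_set_def by blast

lemma D_otp: "\<gamma> \<in> D \<Longrightarrow> \<gamma> < \<alpha> \<Longrightarrow> otp_less (C \<alpha> \<inter> {x. x < \<gamma>}) \<gamma>"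
  using D_spec(2) unfolding R_set_def by blast

lemma D_unb: "\<exists>\<beta>\<in>D. \<alpha> < \<beta>"
  using D_spec(1) unfolding club_def by blast

lemma D_closed: "lim_ord \<beta> \<Longrightarrow> cof D \<beta> \<Longrightarrow> \<beta> \<in> D"
  using D_spec(1) unfolding club_def cof_def by blast

lemma osup_nonD: assumes "nb \<gamma>" "\<gamma> \<notin> D" shows "osup (D \<inter> {x. x < \<gamma>}) < \<gamma>"
proof -
  define X where "X = D \<inter> {x. x < \<gamma>}"
  have ub: "\<forall>x\<in>X. x \<le> \<gamma>" unfolding X_def by auto
  have le: "osup X \<le> \<gamma>" using osup_ub(2)[OF ub] .
  show ?thesis
  proof (rule ccontr)
    assume "\<not> osup (D \<inter> {x. x < \<gamma>}) < \<gamma>"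
    then have eq: "osup X = \<gamma>" using le X_def by simp
    have cofD: "cof D \<gamma>" unfolding cof_def
    proof (intro allI impI)
      fix \<beta> assume "\<beta> < \<gamma>"
      then obtain x where "x \<in> X" "\<beta> < x" using osup_least[OF ub, of \<beta>] eq by auto
      then show "\<exists>c\<in>D. \<beta> < c \<and> c < \<gamma>" unfolding X_def by blast
    qed
    show False
    proof (cases "lim_ord \<gamma>")
      case True then show False using D_closed cofD assms(2) by blast
    next
      case False
      then obtain g where g: "g < \<gamma>" "\<forall>\<eta>. \<not> (g < \<eta> \<and> \<eta> < \<gamma>)" using assms(1) unfolding lim_ord_def nb_def by blast
      then show False using cofD unfolding cof_def by blast
    qed
  qed
qed

definition dplus :: "'a \<Rightarrow> 'a" where "dplus c = (LEAST y. y \<in> D \<and> c < y)"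

lemma dplus_spec: "dplus c \<in> D" "c < dplus c"
proof -
  obtain y where "y \<in> D" "c < y" using D_unb by blast
  then have "dplus c \<in> D \<and> c < dplus c" unfolding dplus_def using LeastI[of "\<lambda>y. y \<in> D \<and> c < y" y] by blast
  then show "dplus c \<in> D" "c < dplus c" by auto
qed

lemma nonD_below_dplus: assumes "nb \<gamma>" "\<gamma> \<notin> D" shows "\<gamma> < dplus (osup (D \<inter> {x. x < \<gamma>}))"
proof (rule ccontr)
  define c where "c = osup (D \<inter> {x. x < \<gamma>})"
  assume "\<not> \<gamma> < dplus (osup (D \<inter> {x. x < \<gamma>}))"
  then have "dplus c \<le> \<gamma>" unfolding c_def by simp
  moreover have "dplus c \<noteq> \<gamma>" using dplus_spec(1) assms(2) by blast
  ultimately have "dplus c < \<gamma>" by simp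
  then have "dplus c \<in> D \<inter> {x. x < \<gamma>}" using dplus_spec(1) by blast
  moreover have "\<forall>x\<in>D \<inter> {x. x < \<gamma>}. x \<le> \<gamma>" by auto
  ultimately have "dplus c \<le> c" unfolding c_def using osup_ub(1) by blast
  then show False using dplus_spec(2)[of c] by simp
qed

lemma cof_self: assumes "lim_ord \<gamma>" shows "cof (C \<gamma>) \<gamma>"
  unfolding cof_def
proof (intro allI impI)
  fix \<beta> assume "\<beta> < \<gamma>"
  then obtain \<eta> where e: "\<beta> < \<eta>" "\<eta> < \<gamma>" using assms unfolding lim_ord_def by blast
  have "nb \<eta>" using e unfolding nb_def by blast
  then obtain c where "c \<in> C \<gamma>" "\<eta> \<le> c" using exists_above[OF e(2)] by blast
  then show "\<exists>c\<in>C \<gamma>. \<beta> < c \<and> c < \<gamma>" using e C_below by (meson order.strict_trans2)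
qed

lemma finite_bound: assumes "nb \<gamma>" "\<And>i. i < (m::nat) \<Longrightarrow> \<exists>b<\<gamma>. \<forall>c\<in>A i. c < \<gamma> \<longrightarrow> c \<le> b"
  shows "\<exists>\<eta><\<gamma>. \<forall>i<m. \<forall>c\<in>A i. c < \<gamma> \<longrightarrow> c \<le> \<eta>"
  using assms(2)
proof (induction m)
  case 0 then show ?case using assms(1) unfolding nb_def by blast
next
  case (Suc m)
  obtain \<eta> where e: "\<eta> < \<gamma>" "\<forall>i<m. \<forall>c\<in>A i. c < \<gamma> \<longrightarrow> c \<le> \<eta>" using Suc by auto
  obtain b where b: "b < \<gamma>" "\<forall>c\<in>A m. c < \<gamma> \<longrightarrow> c \<le> b" using Suc.prems by blast
  have "max \<eta> b < \<gamma>" using e b by simp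
  moreover have "\<forall>i<Suc m. \<forall>c\<in>A i. c < \<gamma> \<longrightarrow> c \<le> max \<eta> b"
  proof (intro allI impI ballI)
    fix i c assume "i < Suc m" "c \<in> A i" "c < \<gamma>"
    show "c \<le> max \<eta> b"
    proof (cases "i = m")
      case True then show ?thesis using b \<open>c \<in> A i\<close> \<open>c < \<gamma>\<close> by (simp add: le_max_iff_disj)
    next
      case False
      then have "i < m" using \<open>i < Suc m\<close> by simp
      then show ?thesis using e \<open>c \<in> A i\<close> \<open>c < \<gamma>\<close> by (simp add: le_max_iff_disj)
    qed
  qed
  ultimately show ?case by blast
qed

definition good :: "('a \<Rightarrow> nat option) \<Rightarrow> 'a \<Rightarrow> nat \<Rightarrow> bool" where
  "good x \<eta> m \<longleftrightarrow> \<eta> < lvl x \<and> (\<exists>\<epsilon>. lvl x \<le> \<epsilon> \<and> (\<forall>\<xi>. \<eta> < \<xi> \<and> \<xi> < lvl x \<longrightarrow> (x \<xi> = Some (Suc m) \<longleftrightarrow> \<xi> \<in> C \<epsilon>))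
      \<and> cof (C \<epsilon>) (lvl x))"

lemma good_ex: assumes x: "x \<in> TT H" and gD: "lvl x \<in> D" shows "\<exists>\<eta> m. good x \<eta> m"
proof -
  define \<gamma> where "\<gamma> = lvl x"
  define \<delta> where "\<delta> = rep H x"
  have xd: "\<gamma> \<le> \<delta>" "x = rs (H \<delta>) \<gamma>" using TT_rep[OF x] \<gamma>_def \<delta>_def by auto
  have lim: "lim_ord \<gamma>" using D_lim gD \<gamma>_def by simp
  have ng: "nb \<gamma>" using lim_nb[OF lim] .
  define n where "n = rho2 C \<gamma> \<delta>"
  define dl where "dl = Tr C \<gamma> \<delta>"
  have dln: "dl n = \<gamma>" unfolding dl_def n_def using rho2_spec(1)[OF ng xd(1)] .
  have Pn: "cof (C (dl n)) \<gamma>" using dln cof_self[OF lim] by simp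
  define m where "m = (LEAST i. cof (C (dl i)) \<gamma>)"
  have Pm: "cof (C (dl m)) \<gamma>" unfolding m_def by (rule LeastI[of _ n]) (rule Pn)
  have mn: "m \<le> n" unfolding m_def by (rule Least_le) (rule Pn)
  have above: "i < m \<Longrightarrow> \<gamma> < dl i" for i unfolding dl_def using rho2_spec(2)[OF ng xd(1)] mn n_def by simp
  have nP: "i < m \<Longrightarrow> \<exists>b<\<gamma>. \<forall>c\<in>C (dl i). c < \<gamma> \<longrightarrow> c \<le> b" for i
  proof -
    assume "i < m"
    then have "\<not> cof (C (dl i)) \<gamma>" unfolding m_def using not_less_Least by blast
    then obtain b where "b < \<gamma>" "\<forall>c\<in>C (dl i). \<not> (b < c \<and> c < \<gamma>)" unfolding cof_def by blast
    then show ?thesis by (meson not_le)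
  qed
  obtain \<eta> where eta: "\<eta> < \<gamma>" "\<forall>i<m. \<forall>c\<in>C (dl i). c < \<gamma> \<longrightarrow> c \<le> \<eta>"
    using finite_bound[OF ng, of m "\<lambda>i. C (dl i)"] nP by blast
  define \<epsilon> where "\<epsilon> = dl m"
  have ge: "\<gamma> \<le> \<epsilon>" unfolding \<epsilon>_def dl_def using Tr_ge[OF ng xd(1)] .
  have key: "x \<xi> = Some (Suc m) \<longleftrightarrow> \<xi> \<in> C \<epsilon>" if xi: "\<eta> < \<xi>" "\<xi> < \<gamma>" for \<xi>
  proof -
    have nx: "nb \<xi>" using xi unfolding nb_def by blast
    have agree: "i \<le> m \<Longrightarrow> Tr C \<xi> \<delta> i = dl i" for i
      unfolding dl_def
    proof (rule Tr_agree[OF nx xi(2)])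
      fix i assume "i < m"
      then show "\<gamma> < Tr C \<gamma> \<delta> i \<and> (\<forall>c\<in>C (Tr C \<gamma> \<delta> i). c < \<gamma> \<longrightarrow> c < \<xi>)"
        using above eta(2) xi(1) unfolding dl_def by (meson order.strict_trans1)
    qed
    have xe: "\<xi> < \<epsilon>" using xi(2) ge by simp
    have r: "rho2 C \<xi> \<delta> = m + rho2 C \<xi> (Tr C \<xi> \<delta> m)"
    proof (rule rho2_shift[OF nx])
      show "\<xi> \<le> \<delta>" using xi(2) xd(1) by simp
      fix i assume "i < m"
      then have "Tr C \<xi> \<delta> i = dl i" using agree by simp
      then show "Tr C \<xi> \<delta> i \<noteq> \<xi>" using above[OF \<open>i < m\<close>] xi(2) by simp
    qed
    then have r': "rho2 C \<xi> \<delta> = m + rho2 C \<xi> \<epsilon>" using agree[of m] \<epsilon>_def by simp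
    have "x \<xi> = Some (rho2 C \<xi> \<delta>)" using xd(2) xi(2) unfolding rs_def by simp
    then have "x \<xi> = Some (Suc m) \<longleftrightarrow> rho2 C \<xi> \<epsilon> = 1" using r' by simp
    also have "\<dots> \<longleftrightarrow> \<xi> \<in> C \<epsilon>" using rho2_one_iff[OF nx xe] .
    finally show ?thesis .
  qed
  have "good x \<eta> m" unfolding good_def \<gamma>_def[symmetric]
    using eta(1) ge key Pm \<epsilon>_def by blast
  then show ?thesis by blast
qed

end


context main
begin

definition eta :: "('a \<Rightarrow> nat option) \<Rightarrow> 'a" where
  "eta x = fst (SOME p. good x (fst p) (snd p))"
definition mm :: "('a \<Rightarrow> nat option) \<Rightarrow> nat" where
  "mm x = snd (SOME p. good x (fst p) (snd p))"

lemma good_eta: assumes "x \<in> TT H" "lvl x \<in> D" shows "good x (eta x) (mm x)"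
proof -
  obtain \<eta> m where "good x \<eta> m" using good_ex[OF assms] by blast
  then have "good x (fst (\<eta>, m)) (snd (\<eta>, m))" by simp
  then have "good x (fst (SOME p. good x (fst p) (snd p))) (snd (SOME p. good x (fst p) (snd p)))"
    by (rule someI[where P="\<lambda>p. good x (fst p) (snd p)"])
  then show ?thesis unfolding eta_def mm_def .
qed

definition S :: "('a \<Rightarrow> nat option) \<Rightarrow> 'a set" where
  "S x = {\<xi>. eta x < \<xi> \<and> \<xi> < lvl x \<and> x \<xi> = Some (Suc (mm x))}"

definition flag :: "('a \<Rightarrow> nat option) \<Rightarrow> bool" where
  "flag x \<longleftrightarrow> \<not> (\<exists>ob<lvl x. emb (S x) ob)"

definition ox :: "('a \<Rightarrow> nat option) \<Rightarrow> 'a" where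
  "ox x = (LEAST ob. emb (S x) ob)"

definition cut :: "('a \<Rightarrow> nat option) \<Rightarrow> 'a" where
  "cut x = (if flag x then eta x else max (eta x) (ox x))"

definition data :: "('a \<Rightarrow> nat option) \<Rightarrow> 'a \<times> nat \<times> bool \<times> 'a" where
  "data x = (eta x, mm x, flag x, if flag x then eta x else ox x)"

lemma cut_props: assumes "x \<in> TT H" "lvl x \<in> D"
  shows "cut x < lvl x" "fst (data x) \<le> cut x" "snd (snd (snd (data x))) \<le> cut x"
proof -
  have e: "eta x < lvl x" using good_eta[OF assms] unfolding good_def by blast
  have o: "\<not> flag x \<Longrightarrow> ox x < lvl x"
  proof -
    assume "\<not> flag x"
    then obtain ob where "ob < lvl x" "emb (S x) ob" unfolding flag_def by blast
    then have "ox x \<le> ob" unfolding ox_def by (rule_tac Least_le)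
    then show "ox x < lvl x" using \<open>ob < lvl x\<close> by simp
  qed
  show "cut x < lvl x" unfolding cut_def using e o by auto
  show "fst (data x) \<le> cut x" unfolding cut_def data_def by auto
  show "snd (snd (snd (data x))) \<le> cut x" unfolding cut_def data_def by auto
qed

lemma antichain_D: assumes x: "x \<in> TT H" "lvl x \<in> D" and y: "y \<in> TT H" "lvl y \<in> D"
  and d: "data x = data y" and lt: "subfun_less x y"
  shows False
proof -
  define \<gamma> where "\<gamma> = lvl x"
  define \<gamma>' where "\<gamma>' = lvl y"
  have gg: "\<gamma> < \<gamma>'" and xr: "x = rx y \<gamma>" using TT_less_iff[OF x(1) y(1)] lt \<gamma>_def \<gamma>'_def by auto
  have em: "eta y = eta x" "mm y = mm x" "flag y = flag x" using d unfolding data_def by auto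
  define \<eta> where "\<eta> = eta x"
  define m where "m = mm x"
  obtain \<epsilon> where ep: "\<gamma> \<le> \<epsilon>" "\<forall>\<xi>. \<eta> < \<xi> \<and> \<xi> < \<gamma> \<longrightarrow> (x \<xi> = Some (Suc m) \<longleftrightarrow> \<xi> \<in> C \<epsilon>)" "cof (C \<epsilon>) \<gamma>"
    and eg: "\<eta> < \<gamma>"
    using good_eta[OF x] unfolding good_def \<gamma>_def \<eta>_def m_def by blast
  obtain \<epsilon>' where ep': "\<gamma>' \<le> \<epsilon>'" "\<forall>\<xi>. \<eta> < \<xi> \<and> \<xi> < \<gamma>' \<longrightarrow> (y \<xi> = Some (Suc m) \<longleftrightarrow> \<xi> \<in> C \<epsilon>')"
    using good_eta[OF y] em unfolding good_def \<gamma>'_def \<eta>_def m_def by auto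
  have xy: "\<xi> < \<gamma> \<Longrightarrow> x \<xi> = y \<xi>" for \<xi> using xr unfolding rx_def by simp
  have Sx: "S x = {\<xi>. \<eta> < \<xi> \<and> \<xi> < \<gamma> \<and> x \<xi> = Some (Suc m)}" unfolding S_def \<eta>_def m_def \<gamma>_def ..
  have Sy: "S y = {\<xi>. \<eta> < \<xi> \<and> \<xi> < \<gamma>' \<and> y \<xi> = Some (Suc m)}" unfolding S_def \<eta>_def m_def \<gamma>'_def em ..
  have SxC: "S x \<subseteq> C \<epsilon>'"
  proof
    fix \<xi> assume "\<xi> \<in> S x"
    then have "\<eta> < \<xi>" "\<xi> < \<gamma>" "x \<xi> = Some (Suc m)" unfolding Sx by auto
    then show "\<xi> \<in> C \<epsilon>'" using ep'(2) xy gg by (metis order.strict_trans)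
  qed
  have SxSy: "S x \<subseteq> S y" unfolding Sx Sy using xy gg by auto
  have Sxg: "\<forall>a\<in>S x. a < \<gamma>" unfolding Sx by auto
  have cofe: "cof (C \<epsilon>') \<gamma>" unfolding cof_def
  proof (intro allI impI)
    fix \<beta> assume "\<beta> < \<gamma>"
    then have "max \<beta> \<eta> < \<gamma>" using eg by simp
    then obtain c where c: "c \<in> C \<epsilon>" "max \<beta> \<eta> < c" "c < \<gamma>" using ep(3) unfolding cof_def by blast
    then have "x c = Some (Suc m)" using ep(2) by simp
    then have "c \<in> S x" unfolding Sx using c by simp
    then show "\<exists>c\<in>C \<epsilon>'. \<beta> < c \<and> c < \<gamma>" using SxC c by auto
  qed
  have lim: "lim_ord \<gamma>" using D_lim x(2) \<gamma>_def by simp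
  have "\<gamma> \<in> C \<epsilon>'" using C_closed'[OF _ lim cofe] gg ep'(1) by simp
  then have gSy: "\<gamma> \<in> S y" unfolding Sy using ep'(2) eg gg by simp
  show False
  proof (cases "flag x")
    case False
    then have Fy: "\<not> flag y" using em by simp
    have oeq: "ox y = ox x" using d False Fy unfolding data_def by simp
    obtain ob where "ob < lvl y" "emb (S y) ob" using Fy unfolding flag_def by blast
    then have "emb (S y) (ox y)" unfolding ox_def by (rule_tac LeastI) 
    then obtain g where g: "\<forall>a\<in>S y. \<forall>b\<in>S y. a < b \<longrightarrow> g a < g b" "\<forall>a\<in>S y. g a < ox y" unfolding emb_def by blast
    have "emb (S x) (g \<gamma>)" unfolding emb_def
    proof (intro exI conjI ballI impI)
      fix a b assume "a \<in> S x" "b \<in> S x" "a < b"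
      then show "g a < g b" using g(1) SxSy by blast
    next
      fix a assume "a \<in> S x"
      then show "g a < g \<gamma>" using g(1) SxSy gSy Sxg by blast
    qed
    then have "ox x \<le> g \<gamma>" unfolding ox_def by (rule Least_le)
    moreover have "g \<gamma> < ox x" using g(2) gSy oeq by simp
    ultimately show False by simp
  next
    case True
    have "\<gamma> < \<epsilon>'" using gg ep'(1) by simp
    then have "otp_less (C \<epsilon>' \<inter> {x. x < \<gamma>}) \<gamma>" using D_otp x(2) \<gamma>_def by simp
    then obtain o0 h where o0: "o0 < \<gamma>" "bij_betw h (C \<epsilon>' \<inter> {x. x < \<gamma>}) {x. x < o0}"
      "\<forall>a\<in>C \<epsilon>' \<inter> {x. x < \<gamma>}. \<forall>b\<in>C \<epsilon>' \<inter> {x. x < \<gamma>}. a < b \<longleftrightarrow> h a < h b"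
      unfolding otp_less_def ord_iso_on_def by blast
    have sub: "S x \<subseteq> C \<epsilon>' \<inter> {x. x < \<gamma>}" using SxC Sxg by blast
    have "emb (S x) o0" unfolding emb_def
    proof (intro exI conjI ballI impI)
      fix a b assume "a \<in> S x" "b \<in> S x" "a < b"
      then show "h a < h b" using o0(3) sub by blast
    next
      fix a assume "a \<in> S x"
      then have "h a \<in> {x. x < o0}" using o0(2) sub unfolding bij_betw_def by blast
      then show "h a < o0" by simp
    qed
    then show False using True o0(1) unfolding flag_def \<gamma>_def by blast
  qed
qed

end


context kap
begin

lemma small_inj: assumes "inj_on g A" "small (g ` A)" shows "small A"
proof -
  have "|A| \<le>o |g ` A|" using card_of_ordLeq[of A "g ` A"] assms(1) by blast
  then show ?thesis using assms(2) unfolding small_def using ordLeq_ordLess_trans by blast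
qed

end

context main
begin

definition fsp :: "('a \<Rightarrow> nat option) \<Rightarrow> ('a \<Rightarrow> nat option)" where
  "fsp x = (if \<not> nb (lvl x) then x else if lvl x \<in> D then rx x (cut x) else rx x (osup (D \<inter> {y. y < lvl x})))"

lemma fsp_props: assumes x: "x \<in> TT H"
  shows "fsp x \<in> TT H" "nb (lvl x) \<Longrightarrow> subfun_less (fsp x) x"
proof -
  have gen: "c < lvl x \<Longrightarrow> rx x c \<in> TT H \<and> subfun_less (rx x c) x" for c
  proof -
    assume c: "c < lvl x"
    have r: "rx x c \<in> TT H" "lvl (rx x c) = c" using TT_rx[OF x, of c] c by auto
    then have "subfun_less (rx x c) x" using TT_less_iff[OF r(1) x] c by simp
    then show ?thesis using r by simp
  qed
  have cases: "nb (lvl x) \<Longrightarrow> \<exists>c<lvl x. fsp x = rx x c"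
  proof -
    assume n: "nb (lvl x)"
    show ?thesis
    proof (cases "lvl x \<in> D")
      case True
      then show ?thesis unfolding fsp_def using n cut_props(1)[OF x True] by auto
    next
      case False
      then show ?thesis unfolding fsp_def using n osup_nonD[OF n False] by auto
    qed
  qed
  show "fsp x \<in> TT H"
  proof (cases "nb (lvl x)")
    case True
    then obtain c where "c < lvl x" "fsp x = rx x c" using cases by blast
    then show ?thesis using gen by simp
  next
    case False then show ?thesis unfolding fsp_def using x by simp
  qed
  show "nb (lvl x) \<Longrightarrow> subfun_less (fsp x) x"
  proof -
    assume "nb (lvl x)"
    then obtain c where "c < lvl x" "fsp x = rx x c" using cases by blast
    then show ?thesis using gen by simp
  qed
qed

lemma level_antichain: "is_antichain (TT H) subfun_less {x \<in> TT H. lvl x = \<beta>}"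
  unfolding is_antichain_def
proof (intro conjI)
  show "{x \<in> TT H. lvl x = \<beta>} \<subseteq> TT H" by blast
  show "\<forall>x\<in>{x \<in> TT H. lvl x = \<beta>}. \<forall>y\<in>{x \<in> TT H. lvl x = \<beta>}. x \<noteq> y \<longrightarrow> \<not> subfun_less x y \<and> \<not> subfun_less y x"
    using TT_same_lvl by (metis (mono_tags, lifting) mem_Collect_eq)
qed

lemma data_antichain: "is_antichain (TT H) subfun_less {x \<in> TT H. lvl x \<in> D \<and> data x = d}"
  unfolding is_antichain_def
proof (intro conjI)
  show "{x \<in> TT H. lvl x \<in> D \<and> data x = d} \<subseteq> TT H" by blast
next
  show "\<forall>x\<in>{x \<in> TT H. lvl x \<in> D \<and> data x = d}. \<forall>y\<in>{x \<in> TT H. lvl x \<in> D \<and> data x = d}. x \<noteq> y \<longrightarrow> \<not> subfun_less x y \<and> \<not> subfun_less y x"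
  proof (intro ballI impI)
  fix x y assume "x \<in> {x \<in> TT H. lvl x \<in> D \<and> data x = d}" "y \<in> {x \<in> TT H. lvl x \<in> D \<and> data x = d}" "x \<noteq> y"
  then have x: "x \<in> TT H" "lvl x \<in> D" and y: "y \<in> TT H" "lvl y \<in> D" and "data x = data y" by auto
  show "\<not> subfun_less x y \<and> \<not> subfun_less y x"
    using antichain_D[OF x y \<open>data x = data y\<close>] antichain_D[OF y x \<open>data x = data y\<close>[symmetric]] by blast
  qed
qed

lemma fiber_cover: assumes z: "z \<in> TT H"
  shows "\<exists>\<A>. small \<A> \<and> (\<forall>A\<in>\<A>. is_antichain (TT H) subfun_less A) \<and> {x \<in> TT H. fsp x = z} \<subseteq> \<Union>\<A>"
proof -
  define c where "c = lvl z"
  define P where "P = {\<beta>. \<beta> \<le> c} \<times> (UNIV :: nat set) \<times> (UNIV :: bool set) \<times> {\<beta>. \<beta> \<le> c}"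
  define \<A> where "\<A> = (\<lambda>\<beta>. {x \<in> TT H. lvl x = \<beta>}) ` {\<beta>. \<beta> \<le> dplus c} \<union> (\<lambda>d. {x \<in> TT H. lvl x \<in> D \<and> data x = d}) ` P"
  have sP: "small P" unfolding P_def
    by (intro small_Times small_le small_countable) simp_all
  have "small \<A>" unfolding \<A>_def by (intro small_Un small_image small_le sP)
  moreover have "\<forall>A\<in>\<A>. is_antichain (TT H) subfun_less A" unfolding \<A>_def using level_antichain data_antichain by blast
  moreover have "{x \<in> TT H. fsp x = z} \<subseteq> \<Union>\<A>"
  proof
    fix x assume "x \<in> {x \<in> TT H. fsp x = z}"
    then have x: "x \<in> TT H" "fsp x = z" by auto
    show "x \<in> \<Union>\<A>"
    proof (cases "nb (lvl x)")
      case False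
      then have "x = z" using x unfolding fsp_def by simp
      then have "lvl x \<le> dplus c" unfolding c_def using dplus_spec(2)[of "lvl z"] by simp
      then show ?thesis unfolding \<A>_def using x(1) by blast
    next
      case n: True
      show ?thesis
      proof (cases "lvl x \<in> D")
        case True
        then have "z = rx x (cut x)" using x n unfolding fsp_def by simp
        then have "c = cut x" unfolding c_def using TT_rx(2)[OF x(1), of "cut x"] cut_props(1)[OF x(1) True] by simp
        then have "data x \<in> P" unfolding P_def using cut_props(2,3)[OF x(1) True] unfolding data_def by auto
        then show ?thesis unfolding \<A>_def using x(1) True by blast
      next
        case False
        define o1 where "o1 = osup (D \<inter> {y. y < lvl x})"
        have "z = rx x o1" using x n False unfolding fsp_def o1_def by simp
        then have "c = o1" unfolding c_def using TT_rx(2)[OF x(1), of o1] osup_nonD[OF n False] o1_def by simp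
        then have "lvl x \<le> dplus c" using nonD_below_dplus[OF n False] o1_def by simp
        then show ?thesis unfolding \<A>_def using x(1) by blast
      qed
    qed
  qed
  ultimately show ?thesis by blast
qed

lemma special: "special_tree TYPE('a) (TT H) subfun_less"
proof -
  have A: "\<forall>x\<in>TT H. fsp x \<in> TT H" using fsp_props(1) by blast
  have B: "\<forall>x\<in>TT H. tree_pred (TT H) subfun_less x \<noteq> {} \<longrightarrow> subfun_less (fsp x) x"
  proof (intro ballI impI)
    fix x assume x: "x \<in> TT H" and "tree_pred (TT H) subfun_less x \<noteq> {}"
    then have "nb (lvl x)" unfolding TT_pred[OF x] nb_def by blast
    then show "subfun_less (fsp x) x" using fsp_props(2)[OF x] by blast
  qed
  have C: "\<forall>z\<in>TT H. \<exists>\<A>. ( |\<A>|, kappa_rel :: 'a rel) \<in> ordLess \<and> (\<forall>A\<in>\<A>. is_antichain (TT H) subfun_less A) \<and> {x \<in> TT H. fsp x = z} \<subseteq> \<Union>\<A>"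
    using fiber_cover unfolding small_def by blast
  show ?thesis unfolding special_tree_def using A B C by blast
qed

end


context main
begin

lemma no_branch: assumes ch: "is_chain (TT H) subfun_less B" and iso: "( |B|, kappa_rel :: 'a rel) \<in> ordIso"
  shows False
proof -
  have BT: "B \<subseteq> TT H" and cmp: "\<forall>x\<in>B. \<forall>y\<in>B. subfun_less x y \<or> x = y \<or> subfun_less y x"
    using ch unfolding is_chain_def by auto
  have unb: "\<exists>x\<in>B. \<gamma> \<le> lvl x" for \<gamma>
  proof (rule ccontr)
    assume "\<not> (\<exists>x\<in>B. \<gamma> \<le> lvl x)"
    then have bd: "\<forall>x\<in>B. lvl x < \<gamma>" by (simp add: not_le)
    have inj: "inj_on lvl B"
    proof (rule inj_onI)
      fix x y assume xy: "x \<in> B" "y \<in> B" "lvl x = lvl y"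
      then have "subfun_less x y \<or> x = y \<or> subfun_less y x" using cmp by blast
      then show "x = y" using TT_same_lvl xy BT by (metis subsetD)
    qed
    have "small (lvl ` B)" by (rule bounded_small[of _ \<gamma>]) (use bd in auto)
    then have "small B" using small_inj[OF inj] by blast
    then show False using iso unfolding small_def using not_ordLess_ordIso by blast
  qed
  define xg where "xg = (\<lambda>\<gamma>. SOME x. x \<in> B \<and> \<gamma> \<le> lvl x)"
  have xg: "xg \<gamma> \<in> B" "\<gamma> \<le> lvl (xg \<gamma>)" for \<gamma>
  proof -
    obtain x where "x \<in> B" "\<gamma> \<le> lvl x" using unb by blast
    then have "xg \<gamma> \<in> B \<and> \<gamma> \<le> lvl (xg \<gamma>)" unfolding xg_def using someI[of "\<lambda>x. x \<in> B \<and> \<gamma> \<le> lvl x" x] by blast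
    then show "xg \<gamma> \<in> B" "\<gamma> \<le> lvl (xg \<gamma>)" by auto
  qed
  define bb where "bb = (\<lambda>\<gamma>. rx (xg \<gamma>) \<gamma>)"
  have bbT: "bb \<gamma> \<in> TT H" "lvl (bb \<gamma>) = \<gamma>" for \<gamma>
    unfolding bb_def using TT_rx[of "xg \<gamma>" H \<gamma>] xg BT by auto
  have coh: "\<gamma> \<le> \<gamma>' \<Longrightarrow> bb \<gamma> = rx (bb \<gamma>') \<gamma>" for \<gamma> \<gamma>'
  proof -
    assume gg: "\<gamma> \<le> \<gamma>'"
    define x1 where "x1 = xg \<gamma>"
    define x2 where "x2 = xg \<gamma>'"
    have x12: "x1 \<in> TT H" "x2 \<in> TT H" "\<gamma> \<le> lvl x1" "\<gamma>' \<le> lvl x2" using xg BT x1_def x2_def by auto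
    have "subfun_less x1 x2 \<or> x1 = x2 \<or> subfun_less x2 x1" using cmp xg x1_def x2_def by blast
    then show ?thesis
    proof (elim disjE)
      assume "subfun_less x1 x2"
      then have e: "x1 = rx x2 (lvl x1)" using TT_less_iff x12 by blast
      have "bb \<gamma> = rx x2 \<gamma>" unfolding bb_def x1_def[symmetric] by (subst e) (rule rx_rx[OF x12(3)])
      moreover have "rx (bb \<gamma>') \<gamma> = rx x2 \<gamma>" unfolding bb_def x2_def[symmetric] by (rule rx_rx[OF gg])
      ultimately show ?thesis by simp
    next
      assume "x1 = x2"
      then show ?thesis unfolding bb_def x1_def x2_def using rx_rx[OF gg] by metis
    next
      assume "subfun_less x2 x1"
      then have e: "x2 = rx x1 (lvl x2)" using TT_less_iff x12 by blast
      have "bb \<gamma>' = rx x1 \<gamma>'" unfolding bb_def x2_def[symmetric] by (subst e) (rule rx_rx[OF x12(4)])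
      then have "rx (bb \<gamma>') \<gamma> = rx x1 \<gamma>" using rx_rx[OF gg] by simp
      then show ?thesis unfolding bb_def x1_def by simp
    qed
  qed
  have bblt: "\<gamma> < \<gamma>' \<Longrightarrow> subfun_less (bb \<gamma>) (bb \<gamma>')" for \<gamma> \<gamma>'
    using TT_less_iff[OF bbT(1) bbT(1)] bbT(2) coh by (metis order.strict_implies_order)
  define gg where "gg = (\<lambda>\<gamma>. lvl (fsp (bb \<gamma>)))"
  have ggp: "nb \<gamma> \<Longrightarrow> gg \<gamma> < \<gamma> \<and> fsp (bb \<gamma>) = bb (gg \<gamma>)" for \<gamma>
  proof -
    assume n: "nb \<gamma>"
    have "subfun_less (fsp (bb \<gamma>)) (bb \<gamma>)" using fsp_props(2)[OF bbT(1)] bbT(2) n by simp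
    then have "gg \<gamma> < \<gamma>" "fsp (bb \<gamma>) = rx (bb \<gamma>) (gg \<gamma>)"
      using TT_less_iff[OF fsp_props(1)[OF bbT(1)] bbT(1)] bbT(2) gg_def by auto
    then show ?thesis using coh by (metis order.strict_implies_order)
  qed
  define F where "F = (\<lambda>\<beta>. {\<gamma>. nb \<gamma> \<and> gg \<gamma> = \<beta>})"
  have Fs: "small (F \<beta>)" for \<beta>
  proof -
    obtain \<A> where A: "small \<A>" "\<forall>A\<in>\<A>. is_antichain (TT H) subfun_less A" "{x \<in> TT H. fsp x = bb \<beta>} \<subseteq> \<Union>\<A>"
      using fiber_cover[OF bbT(1)[of \<beta>]] by blast
    have inU: "\<gamma> \<in> F \<beta> \<Longrightarrow> \<exists>A\<in>\<A>. bb \<gamma> \<in> A" for \<gamma>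
    proof -
      assume "\<gamma> \<in> F \<beta>"
      then have g: "nb \<gamma>" "gg \<gamma> = \<beta>" unfolding F_def by auto
      then have "fsp (bb \<gamma>) = bb \<beta>" using ggp[OF g(1)] by simp
      then have "bb \<gamma> \<in> {x \<in> TT H. fsp x = bb \<beta>}" using bbT(1) by simp
      then show ?thesis using A(3) by blast
    qed
    define ch where "ch = (\<lambda>\<gamma>. SOME A. A \<in> \<A> \<and> bb \<gamma> \<in> A)"
    have chp: "\<gamma> \<in> F \<beta> \<Longrightarrow> ch \<gamma> \<in> \<A> \<and> bb \<gamma> \<in> ch \<gamma>" for \<gamma>
    proof -
      assume "\<gamma> \<in> F \<beta>"
      then have "\<exists>A. A \<in> \<A> \<and> bb \<gamma> \<in> A" using inU by blast
      then show ?thesis unfolding ch_def by (rule someI_ex)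
    qed
    have "inj_on ch (F \<beta>)"
    proof (rule inj_onI)
      fix a b assume ab: "a \<in> F \<beta>" "b \<in> F \<beta>" "ch a = ch b"
      show "a = b"
      proof (rule ccontr)
        assume "a \<noteq> b"
        have ca: "ch a \<in> \<A>" "bb a \<in> ch a" using chp[OF ab(1)] by auto
        have cb: "bb b \<in> ch b" using chp[OF ab(2)] by auto
        have anti: "\<forall>x\<in>ch a. \<forall>y\<in>ch a. x \<noteq> y \<longrightarrow> \<not> subfun_less x y \<and> \<not> subfun_less y x"
          using A(2) ca(1) unfolding is_antichain_def by blast
        have ins: "bb a \<in> ch a" "bb b \<in> ch a" using ca cb ab(3) by auto
        have ne: "bb a \<noteq> bb b"
        proof
          assume "bb a = bb b" then have "lvl (bb a) = lvl (bb b)" by simp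
          then show False using bbT(2)[of a] bbT(2)[of b] \<open>a \<noteq> b\<close> by simp
        qed
        consider "a < b" | "b < a" using \<open>a \<noteq> b\<close> not_less_iff_gr_or_eq by blast
        then show False
        proof cases
          case 1
          then have "subfun_less (bb a) (bb b)" by (rule bblt)
          then show False using anti ins ne by blast
        next
          case 2
          then have "subfun_less (bb b) (bb a)" by (rule bblt)
          then show False using anti ins ne by blast
        qed
      qed
    qed
    moreover have "small (ch ` F \<beta>)"
    proof (rule small_mono[OF _ A(1)])
      show "ch ` F \<beta> \<subseteq> \<A>" using chp by blast
    qed
    ultimately show ?thesis by (rule small_inj)
  qed
  define hb where "hb = (\<lambda>\<beta>. SOME b. \<forall>\<gamma>\<in>F \<beta>. \<gamma> < b)"
  have hb: "\<gamma> \<in> F \<beta> \<Longrightarrow> \<gamma> < hb \<beta>" for \<gamma> \<beta>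
  proof -
    obtain b where "\<forall>\<gamma>\<in>F \<beta>. \<gamma> < b" using small_bounded[OF Fs] by blast
    then have "\<forall>\<gamma>\<in>F \<beta>. \<gamma> < hb \<beta>" unfolding hb_def by (rule someI)
    then show "\<gamma> \<in> F \<beta> \<Longrightarrow> \<gamma> < hb \<beta>" by blast
  qed
  define nxt where "nxt = (\<lambda>a. SOME u. a < u \<and> (\<forall>\<beta>\<le>a. hb \<beta> < u))"
  have nxt: "a < nxt a \<and> (\<forall>\<beta>\<le>a. hb \<beta> < nxt a)" for a
  proof -
    have "small ({a} \<union> hb ` {\<beta>. \<beta> \<le> a})" by (intro small_Un small_finite small_image small_le) simp
    then obtain b where b: "\<forall>x\<in>{a} \<union> hb ` {\<beta>. \<beta> \<le> a}. x < b" using small_bounded by blast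
    then have "a < b \<and> (\<forall>\<beta>\<le>a. hb \<beta> < b)" by auto
    then show ?thesis unfolding nxt_def by (rule someI)
  qed
  define al where "al = (\<lambda>n. (nxt ^^ n) (LEAST x::'a. True))"
  have alS: "al (Suc n) = nxt (al n)" for n unfolding al_def by simp
  obtain b0 where b0: "\<forall>x\<in>range al. x < b0" using small_bounded[OF small_countable[of "range al"]] by blast
  define lam where "lam = (LEAST u. \<forall>n. al n \<le> u)"
  have lam_ub: "\<forall>n. al n \<le> lam" unfolding lam_def by (rule LeastI[of _ b0]) (use b0 in \<open>auto intro: order.strict_implies_order\<close>)
  have "al 0 < al 1" using nxt alS[of 0] by simp
  then have nl: "nb lam" using lam_ub unfolding nb_def by (metis order.strict_trans2)
  have gl: "gg lam < lam" using ggp[OF nl] by blast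
  obtain n where n: "gg lam < al n"
  proof (rule ccontr)
    assume "\<not> thesis"
    then have "\<forall>n. al n \<le> gg lam" using that by (meson not_le)
    then have "lam \<le> gg lam" unfolding lam_def by (rule Least_le)
    then show False using gl by simp
  qed
  have "lam \<in> F (gg lam)" unfolding F_def using nl by simp
  then have "lam < hb (gg lam)" using hb by blast
  also have "hb (gg lam) < al (Suc n)" using nxt[of "al n"] alS n by simp
  also have "al (Suc n) \<le> lam" using lam_ub by blast
  finally show False by simp
qed

lemma final: "kappa_aronszajn TYPE('a) (T_rho2 C) subfun_less \<and> special_tree TYPE('a) (T_rho2 C) subfun_less"
proof -
  have kt: "kappa_tree TYPE('a) (TT H) subfun_less"
    unfolding kappa_tree_def
  proof (intro conjI allI ballI)
    show "is_tree (TT H) subfun_less" by (rule TT_is_tree)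
  next
    fix x assume "x \<in> TT H"
    then show "\<exists>\<alpha>::'a. x \<in> tree_level (TT H) subfun_less \<alpha>" using TT_level_iff by blast
  next
    fix \<alpha> :: 'a
    have "rs (H \<alpha>) \<alpha> \<in> tree_level (TT H) subfun_less \<alpha>" unfolding level_eq using TT_I[of \<alpha> \<alpha> H] by simp
    then show "tree_level (TT H) subfun_less \<alpha> \<noteq> {}" by blast
  next
    fix \<alpha> :: 'a
    show "( |tree_level (TT H) subfun_less \<alpha>|, kappa_rel :: 'a rel) \<in> ordLess"
      using level_small[of \<alpha>] unfolding small_def .
  qed
  have ka: "kappa_aronszajn TYPE('a) (TT H) subfun_less"
    unfolding kappa_aronszajn_def using kt no_branch by blast
  show ?thesis unfolding T_eq using ka special by blast
qed

end

theorem corollary7p4: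
  fixes C :: "'a::wellorder \<Rightarrow> 'a set"
  assumes "regular_uncountable_cardinal_type TYPE('a)"
    and "square_star_lt C"
  shows "kappa_aronszajn TYPE('a) (T_rho2 C) subfun_less
       \<and> special_tree TYPE('a) (T_rho2 C) subfun_less"
proof -
  interpret main C using assms by unfold_locales
  show ?thesis by (rule final)
qed

end
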